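(* For each $n\in\mathbb{N}$ and $r\in(0,+\infty]$, the continuous $\mathcal{O}(\mathbb{C}^\times)$-algebra homomorphism $\mathcal{O}_{\mathrm{def}}(\mathbb{D}_r^n)\to\mathcal{O}^T_{\mathrm{def}}(\mathbb{D}_r^n)$ induced by the inclusion $\mathcal{F}(\mathbb{D}_r^n)\subset\mathcal{F}^T(\mathbb{D}_r^n)$ (sending the class of $\zeta_i$ to the class of $\zeta_i$ and $z$ to $z$) is a topological isomorphism.
   Context: $\mathbb{C}^\times=\mathbb{C}\setminus\{0\}$; $\mathcal{O}(\mathbb{C}^\times)$ holomorphic functions on $\mathbb{C}^\times$, coordinate $z$. $W_n$: finite words $\alpha$ over $\{1,\dots,n\}$, length $|\alpha|$; $s(\alpha)$ is the number of $i$ with $\alpha_i\ne\alpha_{i+1}$ ($s(\alpha)=|\alpha|-1$ if $|\alpha|\le1$). $\mathcal{F}^T(\mathbb{D}_r^n)$: Fréchet algebra of series $\sum_\alpha c_\alpha\zeta_\alpha$ with $\sum|c_\alpha|\rho^{|\alpha|}<\infty$ for all $\rho\in(0,r)$; $\mathcal{F}(\mathbb{D}_r^n)$: those with $\sum|c_\alpha|\rho^{|\alpha|}\tau^{s(\alpha)+1}<\infty$ for all $\rho\in(0,r)$, $\tau\ge1$; both with concatenation product and topology from these norms (so $\mathcal{F}(\mathbb{D}_r^n)\subset\mathcal{F}^T(\mathbb{D}_r^n)$ continuously). For such $F$, $\mathcal{O}(\mathbb{C}^\times,F)\cong\mathcal{O}(\mathbb{C}^\times)\widehat\otimes F$; $\mathcal{O}_{\mathrm{def}}(\mathbb{D}_r^n)$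 and $\mathcal{O}^T_{\mathrm{def}}(\mathbb{D}_r^n)$ are the quotients of $\mathcal{O}(\mathbb{C}^\times,\mathcal{F}(\mathbb{D}_r^n))$ and $\mathcal{O}(\mathbb{C}^\times,\mathcal{F}^T(\mathbb{D}_r^n))$ by the closed two-sided ideals generated by $\zeta_i\zeta_j-z\zeta_j\zeta_i$ ($i<j$). *)

theory Defs
  imports "HOL-Analysis.Analysis" "HOL-Library.Function_Algebras"
begin

text \<open>Elements of O(C^x, F) for F = F(D_r^n) or F^T(D_r^n) are represented by their
  (Laurent x noncommutative power series) coefficient families
  c k alpha = coefficient of z^k zeta_alpha, k an integer, alpha a word over {1..n}.\<close>

type_synonym coeffs = "int \<Rightarrow> nat list \<Rightarrow> complex"

definition words :: "nat \<Rightarrow> nat list set" where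
  "words n = {\<alpha>. set \<alpha> \<subseteq> {1..n}}"

definition switches :: "nat list \<Rightarrow> int" where
  "switches \<alpha> = (if length \<alpha> \<le> 1 then int (length \<alpha>) - 1
     else int (card {i. Suc i < length \<alpha> \<and> \<alpha> ! i \<noteq> \<alpha> ! Suc i}))"

text \<open>The factor R^|k| (for all R \<ge> 1) encodes holomorphy on C^x, i.e. convergence of the
  Laurent series in z on every annulus.\<close>
definition wF :: "real \<Rightarrow> real \<Rightarrow> real \<Rightarrow> int \<Rightarrow> nat list \<Rightarrow> real" where
  "wF \<rho> \<tau> R k \<alpha> = \<rho> ^ length \<alpha> * \<tau> powr (of_int (switches \<alpha> + 1)) * R ^ nat \<bar>k\<bar>"

definition wT :: "real \<Rightarrow> real \<Rightarrow> int \<Rightarrow> nat list \<Rightarrow> real" where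
  "wT \<rho> R k \<alpha> = \<rho> ^ length \<alpha> * R ^ nat \<bar>k\<bar>"

definition wnorm :: "(int \<Rightarrow> nat list \<Rightarrow> real) \<Rightarrow> coeffs \<Rightarrow> real" where
  "wnorm w c = (\<Sum>\<^sub>\<infinity>(k, \<alpha>)\<in>UNIV. norm (c k \<alpha>) * w k \<alpha>)"

definition normsF :: "ereal \<Rightarrow> (coeffs \<Rightarrow> real) set" where
  "normsF r = {wnorm (wF \<rho> \<tau> R) | \<rho> \<tau> R. 0 < \<rho> \<and> ereal \<rho> < r \<and> 1 \<le> \<tau> \<and> 1 \<le> R}"

definition normsT :: "ereal \<Rightarrow> (coeffs \<Rightarrow> real) set" where
  "normsT r = {wnorm (wT \<rho> R) | \<rho> R. 0 < \<rho> \<and> ereal \<rho> < r \<and> 1 \<le> R}"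

definition OF_alg :: "nat \<Rightarrow> ereal \<Rightarrow> coeffs set" where
  "OF_alg n r = {c. (\<forall>k \<alpha>. \<alpha> \<notin> words n \<longrightarrow> c k \<alpha> = 0) \<and>
     (\<forall>\<rho> \<tau> R. 0 < \<rho> \<and> ereal \<rho> < r \<and> 1 \<le> \<tau> \<and> 1 \<le> R \<longrightarrow>
        (\<lambda>(k, \<alpha>). norm (c k \<alpha>) * wF \<rho> \<tau> R k \<alpha>) summable_on UNIV)}"

definition OT_alg :: "nat \<Rightarrow> ereal \<Rightarrow> coeffs set" where
  "OT_alg n r = {c. (\<forall>k \<alpha>. \<alpha> \<notin> words n \<longrightarrow> c k \<alpha> = 0) \<and>
     (\<forall>\<rho> R. 0 < \<rho> \<and> ereal \<rho> < r \<and> 1 \<le> R \<longrightarrow>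
        (\<lambda>(k, \<alpha>). norm (c k \<alpha>) * wT \<rho> R k \<alpha>) summable_on UNIV)}"

text \<open>Product: pointwise product in z (Cauchy product of Laurent series) combined with
  concatenation of words.\<close>
definition cmul :: "coeffs \<Rightarrow> coeffs \<Rightarrow> coeffs" where
  "cmul c d k \<gamma> = (\<Sum>\<^sub>\<infinity>j\<in>UNIV. \<Sum>i\<le>length \<gamma>. c j (take i \<gamma>) * d (k - j) (drop i \<gamma>))"

definition zeta :: "nat \<Rightarrow> coeffs" where
  "zeta i = (\<lambda>k \<alpha>. if k = 0 \<and> \<alpha> = [i] then 1 else 0)"

definition zvar :: coeffs where
  "zvar = (\<lambda>k \<alpha>. if k = 1 \<and> \<alpha> = [] then 1 else 0)"

definition relations :: "nat \<Rightarrow> coeffs set" where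
  "relations n = {cmul (zeta i) (zeta j) - cmul zvar (cmul (zeta j) (zeta i)) | i j.
                    1 \<le> i \<and> i < j \<and> j \<le> n}"

definition seminorm_topology :: "coeffs set \<Rightarrow> (coeffs \<Rightarrow> real) set \<Rightarrow> coeffs topology" where
  "seminorm_topology A P = subtopology (topology_generated_by
      {{y \<in> A. p (y - x) < \<epsilon>} | p x \<epsilon>. p \<in> P \<and> x \<in> A \<and> 0 < \<epsilon>}) A"

definition two_sided_ideal :: "coeffs set \<Rightarrow> coeffs set \<Rightarrow> bool" where
  "two_sided_ideal A I \<longleftrightarrow> I \<subseteq> A \<and> 0 \<in> I \<and> (\<forall>x\<in>I. \<forall>y\<in>I. x + y \<in> I) \<and>
     (\<forall>a\<in>A. \<forall>x\<in>I. cmul a x \<in> I \<and> cmul x a \<in> I)"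

definition closed_ideal_gen :: "coeffs set \<Rightarrow> coeffs topology \<Rightarrow> coeffs set \<Rightarrow> coeffs set" where
  "closed_ideal_gen A X S = \<Inter>{I. S \<subseteq> I \<and> two_sided_ideal A I \<and> closedin X I}"

definition coset :: "coeffs set \<Rightarrow> coeffs set \<Rightarrow> coeffs \<Rightarrow> coeffs set" where
  "coset A I x = {y \<in> A. y - x \<in> I}"

definition quotient_set :: "coeffs set \<Rightarrow> coeffs set \<Rightarrow> coeffs set set" where
  "quotient_set A I = coset A I ` A"

definition quotient_top :: "coeffs set \<Rightarrow> coeffs topology \<Rightarrow> coeffs set \<Rightarrow> coeffs set topology" where
  "quotient_top A X I = subtopology (topology_generated_by
      {U. U \<subseteq> quotient_set A I \<and> openin X (\<Union>U)}) (quotient_set A I)"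

definition XF :: "nat \<Rightarrow> ereal \<Rightarrow> coeffs topology" where
  "XF n r = seminorm_topology (OF_alg n r) (normsF r)"
definition XT :: "nat \<Rightarrow> ereal \<Rightarrow> coeffs topology" where
  "XT n r = seminorm_topology (OT_alg n r) (normsT r)"

definition IF :: "nat \<Rightarrow> ereal \<Rightarrow> coeffs set" where
  "IF n r = closed_ideal_gen (OF_alg n r) (XF n r) (relations n)"
definition IT :: "nat \<Rightarrow> ereal \<Rightarrow> coeffs set" where
  "IT n r = closed_ideal_gen (OT_alg n r) (XT n r) (relations n)"

definition Odef :: "nat \<Rightarrow> ereal \<Rightarrow> coeffs set topology" where
  "Odef n r = quotient_top (OF_alg n r) (XF n r) (IF n r)"
definition OdefT :: "nat \<Rightarrow> ereal \<Rightarrow> coeffs set topology" where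
  "OdefT n r = quotient_top (OT_alg n r) (XT n r) (IT n r)"

text \<open>The map induced by the inclusion F \<subseteq> F^T: class of x \<mapsto> class of x.\<close>
definition induced_map :: "nat \<Rightarrow> ereal \<Rightarrow> coeffs set \<Rightarrow> coeffs set" where
  "induced_map n r C = {y \<in> OT_alg n r. \<exists>x\<in>C. y - x \<in> IT n r}"

end

theory Submission
  imports Defs
begin

section \<open>Generic seminorm topologies\<close>

definition sball :: "coeffs set \<Rightarrow> (coeffs \<Rightarrow> real) \<Rightarrow> coeffs \<Rightarrow> real \<Rightarrow> coeffs set" where
  "sball A p x e = {y \<in> A. p (y - x) < e}"

definition semi_ok :: "coeffs set \<Rightarrow> (coeffs \<Rightarrow> real) set \<Rightarrow> bool" where
  "semi_ok A P \<longleftrightarrow> P \<noteq> {} \<and> (\<forall>x\<in>A. \<forall>y\<in>A. x - y \<in> A) \<and>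
     (\<forall>p\<in>P. \<forall>q\<in>P. \<exists>s\<in>P. \<forall>x\<in>A. p x \<le> s x \<and> q x \<le> s x) \<and>
     (\<forall>p\<in>P. p 0 = 0 \<and> (\<forall>x\<in>A. 0 \<le> p x) \<and> (\<forall>x\<in>A. \<forall>y\<in>A. p (x - y) = p (y - x)) \<and>
        (\<forall>x\<in>A. \<forall>y\<in>A. \<forall>z\<in>A. p (x - z) \<le> p (x - y) + p (y - z)))"

lemma semi_okD:
  assumes "semi_ok A P"
  shows "P \<noteq> {}" "\<And>x y. x\<in>A \<Longrightarrow> y\<in>A \<Longrightarrow> x - y \<in> A"
    "\<And>p q. p\<in>P \<Longrightarrow> q\<in>P \<Longrightarrow> \<exists>s\<in>P. \<forall>x\<in>A. p x \<le> s x \<and> q x \<le> s x"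
    "\<And>p. p\<in>P \<Longrightarrow> p 0 = 0"
    "\<And>p x. p\<in>P \<Longrightarrow> x\<in>A \<Longrightarrow> 0 \<le> p x"
    "\<And>p x y. p\<in>P \<Longrightarrow> x\<in>A \<Longrightarrow> y\<in>A \<Longrightarrow> p (x - y) = p (y - x)"
    "\<And>p x y z. p\<in>P \<Longrightarrow> x\<in>A \<Longrightarrow> y\<in>A \<Longrightarrow> z\<in>A \<Longrightarrow> p (x - z) \<le> p (x - y) + p (y - z)"
  using assms unfolding semi_ok_def by blast+

lemma semi_gen_ball:
  assumes ok: "semi_ok A P" and g: "generate_topology_on {{y \<in> A. p (y - x) < \<epsilon>} | p x \<epsilon>. p \<in> P \<and> x \<in> A \<and> 0 < \<epsilon>} T"
  shows "\<forall>x\<in>T \<inter> A. \<exists>p\<in>P. \<exists>e>0. sball A p x e \<subseteq> T"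
  using g
proof (induction rule: generate_topology_on.induct)
  case Empty
  then show ?case by simp
next
  case (Int a b)
  show ?case
  proof
    fix x assume x: "x \<in> a \<inter> b \<inter> A"
    from Int.IH(1) x obtain p e where p: "p \<in> P" "e > 0" "sball A p x e \<subseteq> a" by blast
    from Int.IH(2) x obtain q d where q: "q \<in> P" "d > 0" "sball A q x d \<subseteq> b" by blast
    from semi_okD(3)[OF ok p(1) q(1)] obtain s where s: "s \<in> P" "\<forall>z\<in>A. p z \<le> s z \<and> q z \<le> s z" by blast
    have "sball A s x (min e d) \<subseteq> a \<inter> b"
    proof
      fix y assume y: "y \<in> sball A s x (min e d)"
      then have yA: "y \<in> A" and "s (y - x) < min e d" by (auto simp: sball_def)
      moreover have yx: "y - x \<in> A" using semi_okD(2)[OF ok] yA x by blast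
      ultimately have "p (y - x) < e" "q (y - x) < d" using s(2)[rule_format, OF yx] by linarith+
      then show "y \<in> a \<inter> b" using p q yA by (auto simp: sball_def)
    qed
    then show "\<exists>p\<in>P. \<exists>e>0. sball A p x e \<subseteq> a \<inter> b" using s(1) p(2) q(2) by (intro bexI[of _ s] exI[of _ "min e d"]) auto
  qed
next
  case (UN K)
  show ?case
  proof
    fix x assume "x \<in> \<Union> K \<inter> A"
    then obtain k where k: "k \<in> K" "x \<in> k \<inter> A" by blast
    with UN.IH obtain p e where "p \<in> P" "e > 0" "sball A p x e \<subseteq> k" by blast
    with k show "\<exists>p\<in>P. \<exists>e>0. sball A p x e \<subseteq> \<Union> K" by blast
  qed
next
  case (Basis s)
  then obtain p x0 \<epsilon> where s: "s = {y \<in> A. p (y - x0) < \<epsilon>}" "p \<in> P" "x0 \<in> A" "0 < \<epsilon>" by blast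
  show ?case
  proof
    fix x assume x: "x \<in> s \<inter> A"
    then have xl: "p (x - x0) < \<epsilon>" using s by auto
    have "sball A p x (\<epsilon> - p (x - x0)) \<subseteq> s"
    proof
      fix y assume y: "y \<in> sball A p x (\<epsilon> - p (x - x0))"
      then have yA: "y \<in> A" and yl: "p (y - x) < \<epsilon> - p (x - x0)" by (auto simp: sball_def)
      have "p (y - x0) \<le> p (y - x) + p (x - x0)" using semi_okD(7)[OF ok s(2) yA _ s(3)] x by blast
      then show "y \<in> s" using yl yA s by auto
    qed
    then show "\<exists>p\<in>P. \<exists>e>0. sball A p x e \<subseteq> s" using s(2) xl by (intro bexI[of _ p] exI[of _ "\<epsilon> - p (x - x0)"]) auto
  qed
qed

lemma openin_semi:
  assumes ok: "semi_ok A P"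
  shows "openin (seminorm_topology A P) U \<longleftrightarrow> U \<subseteq> A \<and> (\<forall>x\<in>U. \<exists>p\<in>P. \<exists>e>0. sball A p x e \<subseteq> U)"
proof
  assume "openin (seminorm_topology A P) U"
  then obtain T where T: "generate_topology_on {{y \<in> A. p (y - x) < \<epsilon>} | p x \<epsilon>. p \<in> P \<and> x \<in> A \<and> 0 < \<epsilon>} T" "U = T \<inter> A"
    unfolding seminorm_topology_def openin_subtopology openin_topology_generated_by_iff by blast
  from semi_gen_ball[OF ok T(1)] T(2) have "\<forall>x\<in>U. \<exists>p\<in>P. \<exists>e>0. sball A p x e \<subseteq> T" by blast
  moreover have "sball A p x e \<subseteq> A" for p x e by (auto simp: sball_def)
  ultimately show "U \<subseteq> A \<and> (\<forall>x\<in>U. \<exists>p\<in>P. \<exists>e>0. sball A p x e \<subseteq> U)" using T(2) by blast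
next
  assume R: "U \<subseteq> A \<and> (\<forall>x\<in>U. \<exists>p\<in>P. \<exists>e>0. sball A p x e \<subseteq> U)"
  define S where "S = {{y \<in> A. p (y - x) < \<epsilon>} | p x \<epsilon>. p \<in> P \<and> x \<in> A \<and> 0 < \<epsilon>}"
  define K where "K = {b. b \<in> S \<and> b \<subseteq> U}"
  have gen: "generate_topology_on S (\<Union>K)"
    by (rule generate_topology_on.UN) (auto simp: K_def intro: generate_topology_on.Basis)
  have "\<Union>K \<inter> A = U"
  proof
    show "\<Union> K \<inter> A \<subseteq> U" by (auto simp: K_def)
    show "U \<subseteq> \<Union> K \<inter> A"
    proof
      fix x assume x: "x \<in> U"
      with R obtain p e where pe: "p \<in> P" "e > 0" "sball A p x e \<subseteq> U" by blast
      have "p 0 = 0" using semi_okD(4)[OF ok pe(1)] .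
      then have "x \<in> sball A p x e" using x R pe by (auto simp: sball_def)
      moreover have "sball A p x e \<in> K" using pe x R unfolding K_def S_def sball_def by blast
      ultimately show "x \<in> \<Union> K \<inter> A" using x R by blast
    qed
  qed
  then show "openin (seminorm_topology A P) U"
    unfolding seminorm_topology_def openin_subtopology openin_topology_generated_by_iff
    using gen S_def by blast
qed

lemma topspace_semi:
  assumes ok: "semi_ok A P"
  shows "topspace (seminorm_topology A P) = A"
proof -
  have "openin (seminorm_topology A P) A"
    proof (subst openin_semi[OF ok], intro conjI ballI)
    fix x assume "x \<in> A"
    obtain p where "p \<in> P" using semi_okD(1)[OF ok] by blast
    then show "\<exists>p\<in>P. \<exists>e>0. sball A p x e \<subseteq> A" by (intro bexI[of _ p] exI[of _ 1]) (auto simp: sball_def)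
  qed simp
  then have "A \<subseteq> topspace (seminorm_topology A P)" by (simp add: openin_subset)
  moreover have "topspace (seminorm_topology A P) \<subseteq> A" unfolding seminorm_topology_def by simp
  ultimately show ?thesis by blast
qed

lemma closedin_semi_approx:
  assumes ok: "semi_ok A P" and cl: "closedin (seminorm_topology A P) I" and x: "x \<in> A"
    and appr: "\<And>p e. p \<in> P \<Longrightarrow> e > 0 \<Longrightarrow> \<exists>y\<in>I. p (x - y) < e"
  shows "x \<in> I"
proof (rule ccontr)
  assume nx: "x \<notin> I"
  have IA: "I \<subseteq> A" using closedin_subset[OF cl] topspace_semi[OF ok] by simp
  have "openin (seminorm_topology A P) (A - I)" using cl topspace_semi[OF ok] by (simp add: closedin_def)
  then have "\<forall>x\<in>A - I. \<exists>p\<in>P. \<exists>e>0. sball A p x e \<subseteq> A - I" by (simp add: openin_semi[OF ok])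
  then obtain p e where pe: "p \<in> P" "e > 0" "sball A p x e \<subseteq> A - I"
    using x nx by blast
  from appr[OF pe(1,2)] obtain y where y: "y \<in> I" "p (x - y) < e" by blast
  have "p (y - x) = p (x - y)" using semi_okD(6)[OF ok pe(1)] x y IA by blast
  then have "y \<in> sball A p x e" using y IA by (auto simp: sball_def)
  then show False using pe y by blast
qed

lemma continuous_semi:
  assumes okA: "semi_ok A P" and okB: "semi_ok B Q"
    and fA: "\<And>x. x \<in> A \<Longrightarrow> f x \<in> B"
    and lin: "\<And>x y. x \<in> A \<Longrightarrow> y \<in> A \<Longrightarrow> f y - f x = f (y - x)"
    and bd: "\<And>q. q \<in> Q \<Longrightarrow> \<exists>p\<in>P. \<exists>C>0. \<forall>z\<in>A. q (f z) \<le> C * p z"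
  shows "continuous_map (seminorm_topology A P) (seminorm_topology B Q) f"
  unfolding continuous_map topspace_semi[OF okA] topspace_semi[OF okB]
proof (intro conjI allI impI)
  show "f ` A \<subseteq> B" using fA by blast
  fix U assume "openin (seminorm_topology B Q) U"
  then have U: "U \<subseteq> B" "\<forall>x\<in>U. \<exists>q\<in>Q. \<exists>e>0. sball B q x e \<subseteq> U" using openin_semi[OF okB] by auto
  show "openin (seminorm_topology A P) {x \<in> A. f x \<in> U}"
    unfolding openin_semi[OF okA]
  proof (intro conjI ballI)
    show "{x \<in> A. f x \<in> U} \<subseteq> A" by blast
    fix x assume x: "x \<in> {x \<in> A. f x \<in> U}"
    then obtain q e where qe: "q \<in> Q" "e > 0" "sball B q (f x) e \<subseteq> U" using U by blast
    from bd[OF qe(1)] obtain p C where pC: "p \<in> P" "C > 0" "\<forall>z\<in>A. q (f z) \<le> C * p z" by blast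
    have "sball A p x (e / C) \<subseteq> {x \<in> A. f x \<in> U}"
    proof
      fix y assume y: "y \<in> sball A p x (e / C)"
      then have yA: "y \<in> A" and yl: "p (y - x) < e / C" by (auto simp: sball_def)
      have yx: "y - x \<in> A" using semi_okD(2)[OF okA] yA x by blast
      have "q (f y - f x) = q (f (y - x))" using lin[of x y] x yA by simp
      also have "\<dots> \<le> C * p (y - x)" using pC yx by blast
      also have "\<dots> < e" using yl pC(2) by (simp add: pos_less_divide_eq mult.commute)
      finally have "f y \<in> sball B q (f x) e" using fA yA by (auto simp: sball_def)
      then show "y \<in> {x \<in> A. f x \<in> U}" using qe yA by blast
    qed
    then show "\<exists>p\<in>P. \<exists>e>0. sball A p x e \<subseteq> {x \<in> A. f x \<in> U}" using pC qe
      by (intro bexI[of _ p] exI[of _ "e / C"]) auto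
  qed
qed

section \<open>Weighted l1 algebras, generic\<close>

definition alg :: "nat \<Rightarrow> (int \<Rightarrow> nat list \<Rightarrow> real) set \<Rightarrow> coeffs set" where
  "alg n W = {c. (\<forall>k \<alpha>. \<alpha> \<notin> words n \<longrightarrow> c k \<alpha> = 0) \<and>
     (\<forall>w\<in>W. (\<lambda>(k, \<alpha>). norm (c k \<alpha>) * w k \<alpha>) summable_on UNIV)}"

definition goodW :: "(int \<Rightarrow> nat list \<Rightarrow> real) set \<Rightarrow> bool" where
  "goodW W \<longleftrightarrow> W \<noteq> {} \<and> (\<forall>w\<in>W. \<forall>k \<alpha>. 0 < w 0 \<alpha> \<and> w 0 \<alpha> \<le> w k \<alpha>) \<and>
     (\<forall>w1\<in>W. \<forall>w2\<in>W. \<exists>w3\<in>W. \<forall>k \<alpha>. w1 k \<alpha> \<le> w3 k \<alpha> \<and> w2 k \<alpha> \<le> w3 k \<alpha>) \<and>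
     (\<forall>w\<in>W. \<forall>k l \<alpha> \<beta>. w (k + l) (\<alpha> @ \<beta>) \<le> w k \<alpha> * w l \<beta>)"

lemma goodWD:
  assumes "goodW W"
  shows "W \<noteq> {}" "\<And>w k \<alpha>. w \<in> W \<Longrightarrow> 0 < w 0 \<alpha>" "\<And>w k \<alpha>. w \<in> W \<Longrightarrow> w 0 \<alpha> \<le> w k \<alpha>"
    "\<And>w1 w2. w1 \<in> W \<Longrightarrow> w2 \<in> W \<Longrightarrow> \<exists>w3\<in>W. \<forall>k \<alpha>. w1 k \<alpha> \<le> w3 k \<alpha> \<and> w2 k \<alpha> \<le> w3 k \<alpha>"
    "\<And>w k l \<alpha> \<beta>. w \<in> W \<Longrightarrow> w (k + l) (\<alpha> @ \<beta>) \<le> w k \<alpha> * w l \<beta>"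
  using assms unfolding goodW_def by blast+

lemma wpos: "goodW W \<Longrightarrow> w \<in> W \<Longrightarrow> 0 < w k \<alpha>"
  using goodWD(2,3) by (meson less_le_trans)

lemma wnn: "goodW W \<Longrightarrow> w \<in> W \<Longrightarrow> 0 \<le> w k \<alpha>"
  using wpos less_imp_le by blast

lemma algD: "c \<in> alg n W \<Longrightarrow> \<alpha> \<notin> words n \<Longrightarrow> c k \<alpha> = 0"
  unfolding alg_def by blast

lemma alg_summ: "c \<in> alg n W \<Longrightarrow> w \<in> W \<Longrightarrow> (\<lambda>(k, \<alpha>). norm (c k \<alpha>) * w k \<alpha>) summable_on UNIV"
  unfolding alg_def by blast

lemma algI:
  assumes "\<And>k \<alpha>. \<alpha> \<notin> words n \<Longrightarrow> c k \<alpha> = 0"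
    and "\<And>w. w \<in> W \<Longrightarrow> (\<lambda>(k, \<alpha>). norm (c k \<alpha>) * w k \<alpha>) summable_on UNIV"
  shows "c \<in> alg n W"
  using assms unfolding alg_def by blast

lemma alg_compare:
  assumes gw: "goodW W" and c: "c \<in> alg n W" and supp: "\<And>k \<alpha>. \<alpha> \<notin> words n \<Longrightarrow> d k \<alpha> = 0"
    and le: "\<And>k \<alpha>. norm (d k \<alpha>) \<le> C * norm (c k \<alpha>)"
  shows "d \<in> alg n W"
proof (rule algI[OF supp])
  fix w assume w: "w \<in> W"
  have "(\<lambda>p. C * (case p of (k, \<alpha>) \<Rightarrow> norm (c k \<alpha>) * w k \<alpha>)) summable_on UNIV"
    using alg_summ[OF c w] by (rule summable_on_cmult_right)
  then show "(\<lambda>(k, \<alpha>). norm (d k \<alpha>) * w k \<alpha>) summable_on UNIV"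
  proof (rule summable_on_comparison_test)
    fix p :: "int \<times> nat list"
    obtain k \<alpha> where p: "p = (k, \<alpha>)" by (cases p)
    have "norm (d k \<alpha>) * w k \<alpha> \<le> C * norm (c k \<alpha>) * w k \<alpha>"
      using le wnn[OF gw w] by (simp add: mult_right_mono)
    then show "(case p of (k, \<alpha>) \<Rightarrow> norm (d k \<alpha>) * w k \<alpha>) \<le> C * (case p of (k, \<alpha>) \<Rightarrow> norm (c k \<alpha>) * w k \<alpha>)"
      by (simp add: p mult.assoc)
    show "0 \<le> (case p of (k, \<alpha>) \<Rightarrow> norm (d k \<alpha>) * w k \<alpha>)" using wnn[OF gw w] by (simp add: p)
  qed
qed

lemma alg_zero: "0 \<in> alg n W"
  by (rule algI) (auto simp: case_prod_unfold)

lemma alg_add: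
  assumes gw: "goodW W" and x: "x \<in> alg n W" and y: "y \<in> alg n W"
  shows "x + y \<in> alg n W"
proof (rule algI)
  show "\<And>k \<alpha>. \<alpha> \<notin> words n \<Longrightarrow> (x + y) k \<alpha> = 0" using algD[OF x] algD[OF y] by simp
  fix w assume w: "w \<in> W"
  have "(\<lambda>p. (case p of (k, \<alpha>) \<Rightarrow> norm (x k \<alpha>) * w k \<alpha>) + (case p of (k, \<alpha>) \<Rightarrow> norm (y k \<alpha>) * w k \<alpha>)) summable_on UNIV"
    using alg_summ[OF x w] alg_summ[OF y w] by (rule summable_on_add)
  then show "(\<lambda>(k, \<alpha>). norm ((x + y) k \<alpha>) * w k \<alpha>) summable_on UNIV"
  proof (rule summable_on_comparison_test)
    fix p :: "int \<times> nat list"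
    obtain k \<alpha> where p: "p = (k, \<alpha>)" by (cases p)
    have "norm (x k \<alpha> + y k \<alpha>) * w k \<alpha> \<le> (norm (x k \<alpha>) + norm (y k \<alpha>)) * w k \<alpha>"
      using mult_right_mono[OF norm_triangle_ineq wnn[OF gw w]] .
    then show "(case p of (k, \<alpha>) \<Rightarrow> norm ((x + y) k \<alpha>) * w k \<alpha>) \<le> (case p of (k, \<alpha>) \<Rightarrow> norm (x k \<alpha>) * w k \<alpha>) + (case p of (k, \<alpha>) \<Rightarrow> norm (y k \<alpha>) * w k \<alpha>)"
      by (simp add: p distrib_right)
    show "0 \<le> (case p of (k, \<alpha>) \<Rightarrow> norm ((x + y) k \<alpha>) * w k \<alpha>)" using wnn[OF gw w] by (simp add: p)
  qed
qed

lemma alg_smul: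
  assumes gw: "goodW W" and x: "x \<in> alg n W"
  shows "(\<lambda>k \<alpha>. s * x k \<alpha>) \<in> alg n W"
  by (rule alg_compare[OF gw x, of _ "norm s"]) (auto simp: algD[OF x] norm_mult)

lemma alg_uminus:
  assumes gw: "goodW W" and x: "x \<in> alg n W"
  shows "- x \<in> alg n W"
  by (rule alg_compare[OF gw x, of _ 1]) (auto simp: algD[OF x])

lemma alg_diff:
  assumes gw: "goodW W" and x: "x \<in> alg n W" and y: "y \<in> alg n W"
  shows "x - y \<in> alg n W"
  using alg_add[OF gw x alg_uminus[OF gw y]] by (simp only: diff_conv_add_uminus)

lemma wnorm_nonneg:
  assumes gw: "goodW W" and w: "w \<in> W"
  shows "0 \<le> wnorm w x"
  unfolding wnorm_def by (rule infsum_nonneg) (auto simp: case_prod_unfold intro!: mult_nonneg_nonneg wnn[OF gw w])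

lemma wnorm_uminus: "wnorm w (- x) = wnorm w x"
  unfolding wnorm_def by simp

lemma wnorm_zero: "wnorm w 0 = 0"
  unfolding wnorm_def by (simp add: case_prod_unfold)

lemma wnorm_smul: "wnorm w (\<lambda>k \<alpha>. s * x k \<alpha>) = norm s * wnorm w x"
  unfolding wnorm_def
  by (subst infsum_cmult_right'[symmetric]) (simp add: norm_mult mult.assoc case_prod_unfold)

lemma wnorm_add:
  assumes gw: "goodW W" and x: "x \<in> alg n W" and y: "y \<in> alg n W" and w: "w \<in> W"
  shows "wnorm w (x + y) \<le> wnorm w x + wnorm w y"
proof -
  have "wnorm w (x + y) \<le> (\<Sum>\<^sub>\<infinity>p. (case p of (k, \<alpha>) \<Rightarrow> norm (x k \<alpha>) * w k \<alpha>) + (case p of (k, \<alpha>) \<Rightarrow> norm (y k \<alpha>) * w k \<alpha>))"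
    unfolding wnorm_def
  proof (rule infsum_mono)
    show "(\<lambda>(k, \<alpha>). norm ((x + y) k \<alpha>) * w k \<alpha>) summable_on UNIV" using alg_summ[OF alg_add[OF gw x y] w] .
    show "(\<lambda>p. (case p of (k, \<alpha>) \<Rightarrow> norm (x k \<alpha>) * w k \<alpha>) + (case p of (k, \<alpha>) \<Rightarrow> norm (y k \<alpha>) * w k \<alpha>)) summable_on UNIV"
      using alg_summ[OF x w] alg_summ[OF y w] by (rule summable_on_add)
    fix p :: "int \<times> nat list"
    obtain k \<alpha> where p: "p = (k, \<alpha>)" by (cases p)
    have "norm (x k \<alpha> + y k \<alpha>) * w k \<alpha> \<le> (norm (x k \<alpha>) + norm (y k \<alpha>)) * w k \<alpha>"
      using mult_right_mono[OF norm_triangle_ineq wnn[OF gw w]] .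
    then show "(case p of (k, \<alpha>) \<Rightarrow> norm ((x + y) k \<alpha>) * w k \<alpha>) \<le> (case p of (k, \<alpha>) \<Rightarrow> norm (x k \<alpha>) * w k \<alpha>) + (case p of (k, \<alpha>) \<Rightarrow> norm (y k \<alpha>) * w k \<alpha>)"
      by (simp add: p distrib_right)
  qed
  also have "\<dots> = wnorm w x + wnorm w y"
    unfolding wnorm_def using alg_summ[OF x w] alg_summ[OF y w] by (rule infsum_add)
  finally show ?thesis .
qed

lemma wnorm_mono:
  assumes gw: "goodW W" and x: "x \<in> alg n W" and w1: "w1 \<in> W" and w2: "w2 \<in> W"
    and le: "\<And>k \<alpha>. w1 k \<alpha> \<le> w2 k \<alpha>"
  shows "wnorm w1 x \<le> wnorm w2 x"
  unfolding wnorm_def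
  by (rule infsum_mono[OF alg_summ[OF x w1] alg_summ[OF x w2]]) (auto intro!: mult_left_mono le)

lemma coef_le:
  assumes gw: "goodW W" and x: "x \<in> alg n W" and w: "w \<in> W"
  shows "norm (x k \<alpha>) * w k \<alpha> \<le> wnorm w x"
proof -
  have "sum (\<lambda>(k, \<alpha>). norm (x k \<alpha>) * w k \<alpha>) {(k, \<alpha>)} \<le> wnorm w x"
    unfolding wnorm_def
    by (rule finite_sum_le_infsum[OF alg_summ[OF x w]]) (auto intro!: mult_nonneg_nonneg wnn[OF gw w])
  then show ?thesis by simp
qed

lemma coef_bound:
  assumes gw: "goodW W" and x: "x \<in> alg n W" and w: "w \<in> W"
  shows "norm (x k \<alpha>) \<le> wnorm w x / w k \<alpha>"
  using coef_le[OF gw x w, of k \<alpha>] wpos[OF gw w, of k \<alpha>] by (simp add: pos_le_divide_eq)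

lemma semi_ok_alg:
  assumes gw: "goodW W"
  shows "semi_ok (alg n W) (wnorm ` W)"
proof -
  have 1: "wnorm ` W \<noteq> {}" using goodWD(1)[OF gw] by simp
  have 2: "\<forall>x\<in>alg n W. \<forall>y\<in>alg n W. x - y \<in> alg n W" using alg_diff[OF gw] by blast
  have 3: "\<forall>p\<in>wnorm ` W. \<forall>q\<in>wnorm ` W. \<exists>s\<in>wnorm ` W. \<forall>x\<in>alg n W. p x \<le> s x \<and> q x \<le> s x"
  proof (intro ballI)
    fix p q assume "p \<in> wnorm ` W" "q \<in> wnorm ` W"
    then obtain w1 w2 where w: "w1 \<in> W" "w2 \<in> W" "p = wnorm w1" "q = wnorm w2" by blast
    from goodWD(4)[OF gw w(1,2)] obtain w3 where w3: "w3 \<in> W" "\<forall>k \<alpha>. w1 k \<alpha> \<le> w3 k \<alpha> \<and> w2 k \<alpha> \<le> w3 k \<alpha>" by blast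
    show "\<exists>s\<in>wnorm ` W. \<forall>x\<in>alg n W. p x \<le> s x \<and> q x \<le> s x"
      using w w3 by (intro bexI[of _ "wnorm w3"]) (auto intro!: wnorm_mono[OF gw])
  qed
  have 4: "\<forall>p\<in>wnorm ` W. p 0 = 0 \<and> (\<forall>x\<in>alg n W. 0 \<le> p x) \<and> (\<forall>x\<in>alg n W. \<forall>y\<in>alg n W. p (x - y) = p (y - x)) \<and>
        (\<forall>x\<in>alg n W. \<forall>y\<in>alg n W. \<forall>z\<in>alg n W. p (x - z) \<le> p (x - y) + p (y - z))"
  proof (intro ballI conjI)
    fix p assume "p \<in> wnorm ` W"
    then obtain w where w: "w \<in> W" "p = wnorm w" by blast
    show "p 0 = 0" using w by (simp add: wnorm_zero)
    show "0 \<le> p x" for x using w wnorm_nonneg[OF gw] by simp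
    show "p (x - y) = p (y - x)" for x y
      using w by (metis minus_diff_eq wnorm_uminus)
    fix x y z assume xyz: "x \<in> alg n W" "y \<in> alg n W" "z \<in> alg n W"
    have "x - z = (x - y) + (y - z)" by simp
    then show "p (x - z) \<le> p (x - y) + p (y - z)"
      using w wnorm_add[OF gw alg_diff[OF gw xyz(1,2)] alg_diff[OF gw xyz(2,3)] w(1)] by simp
  qed
  show ?thesis unfolding semi_ok_def using 1 2 3 4 by blast
qed

lemma sum_infsum_swap:
  fixes f :: "'p \<Rightarrow> 'm \<Rightarrow> 'b::{topological_comm_monoid_add, t2_space}"
  assumes "finite F" and "\<And>p. p \<in> F \<Longrightarrow> f p summable_on A"
  shows "(\<Sum>p\<in>F. infsum (f p) A) = infsum (\<lambda>m. \<Sum>p\<in>F. f p m) A \<and> (\<lambda>m. \<Sum>p\<in>F. f p m) summable_on A"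
  using assms
proof (induction F rule: finite_induct)
  case empty
  then show ?case by simp
next
  case (insert x F)
  then have IH: "(\<Sum>p\<in>F. infsum (f p) A) = infsum (\<lambda>m. \<Sum>p\<in>F. f p m) A" "(\<lambda>m. \<Sum>p\<in>F. f p m) summable_on A"
    by auto
  have fx: "f x summable_on A" using insert by auto
  show ?case
    using insert(1,2) IH infsum_add[OF fx IH(2)] summable_on_add[OF fx IH(2)] by simp
qed

lemma sum_fun_apply: "(\<Sum>m\<in>F. (t m :: coeffs)) k a = (\<Sum>m\<in>F. t m k a)"
  by (induction F rule: infinite_finite_induct) auto

lemma abs_sum_alg:
  fixes t :: "'m \<Rightarrow> coeffs"
  assumes gw: "goodW W" and t: "\<And>m. t m \<in> alg n W"
    and sm: "\<And>w. w \<in> W \<Longrightarrow> (\<lambda>m. wnorm w (t m)) summable_on UNIV"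
  shows abs_sum_coef: "\<And>k \<alpha>. (\<lambda>m. norm (t m k \<alpha>)) summable_on UNIV"
    and abs_sum_mem: "(\<lambda>k \<alpha>. \<Sum>\<^sub>\<infinity>m. t m k \<alpha>) \<in> alg n W"
    and abs_sum_norm: "\<And>w. w \<in> W \<Longrightarrow> wnorm w (\<lambda>k \<alpha>. \<Sum>\<^sub>\<infinity>m. t m k \<alpha>) \<le> (\<Sum>\<^sub>\<infinity>m. wnorm w (t m))"
proof -
  obtain w0 where w0: "w0 \<in> W" using goodWD(1)[OF gw] by blast
  show coef: "(\<lambda>m. norm (t m k \<alpha>)) summable_on UNIV" for k \<alpha>
  proof -
    have "(\<lambda>m. wnorm w0 (t m) * (1 / w0 k \<alpha>)) summable_on UNIV"
      using sm[OF w0] by (rule summable_on_cmult_left)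
    then show ?thesis
      by (rule summable_on_comparison_test) (use coef_bound[OF gw t w0] in auto)
  qed
  define S where "S = (\<lambda>k \<alpha>. \<Sum>\<^sub>\<infinity>m. t m k \<alpha>)"
  have Sle: "norm (S k \<alpha>) \<le> (\<Sum>\<^sub>\<infinity>m. norm (t m k \<alpha>))" for k \<alpha>
    unfolding S_def by (rule norm_infsum_bound[OF coef])
  have main: "sum (\<lambda>(k, \<alpha>). norm (S k \<alpha>) * w k \<alpha>) F \<le> (\<Sum>\<^sub>\<infinity>m. wnorm w (t m))"
    if w: "w \<in> W" and F: "finite F" for w F
  proof -
    have "\<And>p. (\<lambda>m. case p of (k, \<alpha>) \<Rightarrow> norm (t m k \<alpha>) * w k \<alpha>) summable_on UNIV"
      using coef by (auto simp: case_prod_unfold intro!: summable_on_cmult_left)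
    from sum_infsum_swap[OF F, of "\<lambda>p m. case p of (k, \<alpha>) \<Rightarrow> norm (t m k \<alpha>) * w k \<alpha>", OF this]
    have swp: "sum (\<lambda>p. \<Sum>\<^sub>\<infinity>m. (case p of (k, \<alpha>) \<Rightarrow> norm (t m k \<alpha>) * w k \<alpha>)) F = (\<Sum>\<^sub>\<infinity>m. sum (\<lambda>p. case p of (k, \<alpha>) \<Rightarrow> norm (t m k \<alpha>) * w k \<alpha>) F)"
      and sF: "(\<lambda>m. sum (\<lambda>p. case p of (k, \<alpha>) \<Rightarrow> norm (t m k \<alpha>) * w k \<alpha>) F) summable_on UNIV"
      by auto
    have "sum (\<lambda>(k, \<alpha>). norm (S k \<alpha>) * w k \<alpha>) F \<le> sum (\<lambda>p. \<Sum>\<^sub>\<infinity>m. (case p of (k, \<alpha>) \<Rightarrow> norm (t m k \<alpha>) * w k \<alpha>)) F"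
    proof (rule sum_mono)
      fix p :: "int \<times> nat list"
      obtain k \<alpha> where p: "p = (k, \<alpha>)" by (cases p)
      have "norm (S k \<alpha>) * w k \<alpha> \<le> (\<Sum>\<^sub>\<infinity>m. norm (t m k \<alpha>)) * w k \<alpha>"
        using Sle wnn[OF gw w] by (simp add: mult_right_mono)
      also have "\<dots> = (\<Sum>\<^sub>\<infinity>m. norm (t m k \<alpha>) * w k \<alpha>)"
        by (rule infsum_cmult_left[symmetric]) (use coef in auto)
      finally show "(case p of (k, \<alpha>) \<Rightarrow> norm (S k \<alpha>) * w k \<alpha>) \<le> (\<Sum>\<^sub>\<infinity>m. (case p of (k, \<alpha>) \<Rightarrow> norm (t m k \<alpha>) * w k \<alpha>))"
        by (simp add: p)
    qed
    also have "\<dots> = (\<Sum>\<^sub>\<infinity>m. sum (\<lambda>p. case p of (k, \<alpha>) \<Rightarrow> norm (t m k \<alpha>) * w k \<alpha>) F)"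
      using swp by blast
    also have "\<dots> \<le> (\<Sum>\<^sub>\<infinity>m. wnorm w (t m))"
    proof (rule infsum_mono[OF sF sm[OF w]])
      fix m
      show "sum (\<lambda>p. case p of (k, \<alpha>) \<Rightarrow> norm (t m k \<alpha>) * w k \<alpha>) F \<le> wnorm w (t m)"
        unfolding wnorm_def
        by (rule finite_sum_le_infsum[OF alg_summ[OF t w] F]) (auto intro!: mult_nonneg_nonneg wnn[OF gw w])
    qed
    finally show ?thesis .
  qed
  have summ: "(\<lambda>(k, \<alpha>). norm (S k \<alpha>) * w k \<alpha>) summable_on UNIV" if w: "w \<in> W" for w
    by (rule nonneg_bdd_above_summable_on)
       (use main[OF w] wnn[OF gw w] in \<open>auto intro!: bdd_aboveI[of _ "\<Sum>\<^sub>\<infinity>m. wnorm w (t m)"]\<close>)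
  show "(\<lambda>k \<alpha>. \<Sum>\<^sub>\<infinity>m. t m k \<alpha>) \<in> alg n W"
    unfolding S_def[symmetric]
  proof (rule algI[OF _ summ])
    fix k \<alpha> assume "\<alpha> \<notin> words n"
    then show "S k \<alpha> = 0" unfolding S_def using algD[OF t] by simp
  qed
  show "wnorm w (\<lambda>k \<alpha>. \<Sum>\<^sub>\<infinity>m. t m k \<alpha>) \<le> (\<Sum>\<^sub>\<infinity>m. wnorm w (t m))" if w: "w \<in> W" for w
  proof -
    have "infsum (\<lambda>(k, \<alpha>). norm (S k \<alpha>) * w k \<alpha>) UNIV \<le> (\<Sum>\<^sub>\<infinity>m. wnorm w (t m))"
      by (rule infsum_le_finite_sums[OF summ[OF w]]) (use main[OF w] in auto)
    then show ?thesis unfolding S_def[symmetric] wnorm_def[of w S] .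
  qed
qed

lemma abs_sum_tail:
  fixes t :: "'m \<Rightarrow> coeffs"
  assumes gw: "goodW W" and t: "\<And>m. t m \<in> alg n W"
    and sm: "\<And>w. w \<in> W \<Longrightarrow> (\<lambda>m. wnorm w (t m)) summable_on UNIV"
    and w: "w \<in> W" and e: "e > 0"
  shows "\<exists>F. finite F \<and> wnorm w ((\<lambda>k \<alpha>. \<Sum>\<^sub>\<infinity>m. t m k \<alpha>) - (\<Sum>m\<in>F. t m)) < e"
proof -
  from infsum_finite_approximation[OF sm[OF w], of "e/2"] e obtain F where
    F: "finite F" "dist (\<Sum>m\<in>F. wnorm w (t m)) (\<Sum>\<^sub>\<infinity>m. wnorm w (t m)) \<le> e/2" by auto
  define t' where "t' m = (if m \<in> F then 0 else t m)" for m
  have t': "t' m \<in> alg n W" for m using t alg_zero by (simp add: t'_def)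
  have sm': "(\<lambda>m. wnorm w' (t' m)) summable_on UNIV" if w': "w' \<in> W" for w'
    by (rule summable_on_comparison_test[OF sm[OF w']]) (auto simp: t'_def wnorm_zero wnorm_nonneg[OF gw w'])
  have eq: "(\<lambda>k \<alpha>. \<Sum>\<^sub>\<infinity>m. t m k \<alpha>) - (\<Sum>m\<in>F. t m) = (\<lambda>k \<alpha>. \<Sum>\<^sub>\<infinity>m. t' m k \<alpha>)"
  proof (intro ext)
    fix k \<alpha>
    have s1: "(\<lambda>m. t m k \<alpha>) summable_on UNIV"
      using abs_sum_coef[OF gw t sm] by (rule abs_summable_summable)
    have "(\<Sum>\<^sub>\<infinity>m. t' m k \<alpha>) = (\<Sum>\<^sub>\<infinity>m\<in>UNIV - F. t m k \<alpha>)"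
      by (rule infsum_cong_neutral) (auto simp: t'_def)
    also have "\<dots> = (\<Sum>\<^sub>\<infinity>m. t m k \<alpha>) - (\<Sum>\<^sub>\<infinity>m\<in>F. t m k \<alpha>)"
      by (rule infsum_Diff[OF s1]) (use F in auto)
    finally show "((\<lambda>k \<alpha>. \<Sum>\<^sub>\<infinity>m. t m k \<alpha>) - (\<Sum>m\<in>F. t m)) k \<alpha> = (\<Sum>\<^sub>\<infinity>m. t' m k \<alpha>)"
      using F by (simp add: sum_fun_apply)
  qed
  have "wnorm w ((\<lambda>k \<alpha>. \<Sum>\<^sub>\<infinity>m. t m k \<alpha>) - (\<Sum>m\<in>F. t m)) \<le> (\<Sum>\<^sub>\<infinity>m. wnorm w (t' m))"
    unfolding eq by (rule abs_sum_norm[OF gw t' sm' w])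
  also have "(\<Sum>\<^sub>\<infinity>m. wnorm w (t' m)) = (\<Sum>\<^sub>\<infinity>m\<in>UNIV - F. wnorm w (t m))"
    by (rule infsum_cong_neutral) (auto simp: t'_def wnorm_zero)
  also have "\<dots> = (\<Sum>\<^sub>\<infinity>m. wnorm w (t m)) - (\<Sum>m\<in>F. wnorm w (t m))"
    by (subst infsum_Diff[OF sm[OF w]]) (use F in auto)
  also have "\<dots> \<le> e/2" using F(2) abs_ge_minus_self[of "(\<Sum>m\<in>F. wnorm w (t m)) - (\<Sum>\<^sub>\<infinity>m. wnorm w (t m))"]
    unfolding dist_real_def by linarith
  finally show ?thesis using F(1) e by (intro exI[of _ F]) auto
qed

lemma abs_sum_closed:
  fixes t :: "'m \<Rightarrow> coeffs"
  assumes gw: "goodW W" and t: "\<And>m. t m \<in> alg n W"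
    and sm: "\<And>w. w \<in> W \<Longrightarrow> (\<lambda>m. wnorm w (t m)) summable_on UNIV"
    and cl: "closedin (seminorm_topology (alg n W) (wnorm ` W)) I"
    and I0: "0 \<in> I" and Iadd: "\<And>x y. x \<in> I \<Longrightarrow> y \<in> I \<Longrightarrow> x + y \<in> I"
    and tI: "\<And>m. t m \<in> I"
  shows "(\<lambda>k \<alpha>. \<Sum>\<^sub>\<infinity>m. t m k \<alpha>) \<in> I"
proof (rule closedin_semi_approx[OF semi_ok_alg[OF gw] cl abs_sum_mem[OF gw t sm]])
  fix p e assume p: "p \<in> wnorm ` W" and e: "(e::real) > 0"
  then obtain w where w: "w \<in> W" "p = wnorm w" by blast
  from abs_sum_tail[OF gw t sm w(1) e] obtain F where
    F: "finite F" "wnorm w ((\<lambda>k \<alpha>. \<Sum>\<^sub>\<infinity>m. t m k \<alpha>) - (\<Sum>m\<in>F. t m)) < e" by blast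
  have "(\<Sum>m\<in>F. t m) \<in> I" using F(1)
  proof (induction F rule: finite_induct)
    case empty
    show ?case using I0 by (simp only: sum.empty)
  next
    case (insert x F)
    show ?case using Iadd[OF tI[of x] insert.IH] by (subst sum.insert[OF insert(1,2)])
  qed
  then show "\<exists>y\<in>I. p ((\<lambda>k \<alpha>. \<Sum>\<^sub>\<infinity>m. t m k \<alpha>) - y) < e" using F w by blast
qed

section \<open>Monomials and multiplication by monomials\<close>

definition monom :: "complex \<Rightarrow> int \<Rightarrow> nat list \<Rightarrow> coeffs" where
  "monom s k u = (\<lambda>k' \<alpha>. if k' = k \<and> \<alpha> = u then s else 0)"

definition lmul :: "complex \<Rightarrow> int \<Rightarrow> nat list \<Rightarrow> coeffs \<Rightarrow> coeffs" where
  "lmul s k u c = (\<lambda>K \<gamma>. if (\<exists>\<delta>. \<gamma> = u @ \<delta>) then s * c (K - k) (drop (length u) \<gamma>) else 0)"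

definition rmul :: "complex \<Rightarrow> int \<Rightarrow> nat list \<Rightarrow> coeffs \<Rightarrow> coeffs" where
  "rmul s k u c = (\<lambda>K \<gamma>. if (\<exists>\<delta>. \<gamma> = \<delta> @ u) then c (K - k) (take (length \<gamma> - length u) \<gamma>) * s else 0)"

lemma infsum_single_int:
  fixes f :: "'a \<Rightarrow> 'b::{comm_monoid_add, t2_space}"
  assumes "\<And>j. j \<noteq> k \<Longrightarrow> f j = 0"
  shows "infsum f UNIV = f k"
proof -
  have "infsum f UNIV = infsum f {k}" by (rule infsum_cong_neutral) (use assms in auto)
  then show ?thesis by simp
qed

lemma prefix_iff_take: "(\<exists>\<delta>. \<gamma> = u @ \<delta>) \<longleftrightarrow> take (length u) \<gamma> = u"
  by (metis append_eq_conv_conj append_take_drop_id)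

lemma suffix_iff_drop: "(\<exists>\<delta>. \<gamma> = \<delta> @ u) \<longleftrightarrow> drop (length \<gamma> - length u) \<gamma> = u"
proof
  assume "\<exists>\<delta>. \<gamma> = \<delta> @ u" then show "drop (length \<gamma> - length u) \<gamma> = u" by auto
next
  assume "drop (length \<gamma> - length u) \<gamma> = u"
  then show "\<exists>\<delta>. \<gamma> = \<delta> @ u" by (metis append_take_drop_id)
qed

lemma cmul_mono_left: "cmul (monom s k u) c = lmul s k u c"
proof (intro ext)
  fix K \<gamma>
  have "cmul (monom s k u) c K \<gamma> = (\<Sum>i\<le>length \<gamma>. monom s k u k (take i \<gamma>) * c (K - k) (drop i \<gamma>))"
    unfolding cmul_def by (rule infsum_single_int) (simp add: monom_def)
  also have "\<dots> = (\<Sum>i\<le>length \<gamma>. if i = length u then (if take (length u) \<gamma> = u then s * c (K - k) (drop (length u) \<gamma>) else 0) else 0)"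
  proof (rule sum.cong[OF refl])
    fix i assume i: "i \<in> {..length \<gamma>}"
    show "monom s k u k (take i \<gamma>) * c (K - k) (drop i \<gamma>) = (if i = length u then (if take (length u) \<gamma> = u then s * c (K - k) (drop (length u) \<gamma>) else 0) else 0)"
      using i by (auto simp: monom_def)
  qed
  also have "\<dots> = lmul s k u c K \<gamma>"
    unfolding lmul_def prefix_iff_take by (auto simp: sum.delta' dest: arg_cong[of _ _ length])
  finally show "cmul (monom s k u) c K \<gamma> = lmul s k u c K \<gamma>" .
qed

lemma cmul_mono_right: "cmul c (monom s k u) = rmul s k u c"
proof (intro ext)
  fix K \<gamma>
  have "cmul c (monom s k u) K \<gamma> = (\<Sum>i\<le>length \<gamma>. c (K - k) (take i \<gamma>) * monom s k u (K - (K - k)) (drop i \<gamma>))"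
    unfolding cmul_def by (rule infsum_single_int) (auto simp: monom_def)
  also have "\<dots> = (\<Sum>i\<le>length \<gamma>. if i = length \<gamma> - length u then (if drop (length \<gamma> - length u) \<gamma> = u then c (K - k) (take (length \<gamma> - length u) \<gamma>) * s else 0) else 0)"
  proof (rule sum.cong[OF refl])
    fix i assume i: "i \<in> {..length \<gamma>}"
    show "c (K - k) (take i \<gamma>) * monom s k u (K - (K - k)) (drop i \<gamma>) = (if i = length \<gamma> - length u then (if drop (length \<gamma> - length u) \<gamma> = u then c (K - k) (take (length \<gamma> - length u) \<gamma>) * s else 0) else 0)"
      using i by (auto simp: monom_def)
  qed
  also have "\<dots> = rmul s k u c K \<gamma>"
    unfolding rmul_def suffix_iff_drop by (auto simp: sum.delta')
  finally show "cmul c (monom s k u) K \<gamma> = rmul s k u c K \<gamma>" .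
qed

lemma lmul_lmul: "lmul s k u (lmul s' k' u' c) = lmul (s * s') (k + k') (u @ u') c"
  unfolding lmul_def by (auto simp: fun_eq_iff algebra_simps)

lemma rmul_rmul: "rmul s k u (rmul s' k' u' c) = rmul (s' * s) (k' + k) (u' @ u) c"
  unfolding rmul_def by (auto simp: fun_eq_iff algebra_simps)

lemma lmul_rmul: "lmul s k u (rmul s' k' u' c) = rmul s' k' u' (lmul s k u c)"
proof (intro ext)
  fix K \<gamma>
  show "lmul s k u (rmul s' k' u' c) K \<gamma> = rmul s' k' u' (lmul s k u c) K \<gamma>"
  proof (cases "\<exists>m. \<gamma> = u @ m @ u'")
    case True
    then obtain m where m: "\<gamma> = u @ m @ u'" by blast
    show ?thesis unfolding m lmul_def rmul_def
      by (auto simp: algebra_simps)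
  next
    case False
    have L: "lmul s k u (rmul s' k' u' c) K \<gamma> = 0"
    proof (cases "\<exists>\<delta>. \<gamma> = u @ \<delta>")
      case True
      then obtain \<delta> where d: "\<gamma> = u @ \<delta>" by blast
      have "\<not> (\<exists>\<epsilon>. \<delta> = \<epsilon> @ u')" using False d by auto
      then show ?thesis using d by (simp add: rmul_def lmul_def)
    qed (simp add: lmul_def)
    have R: "rmul s' k' u' (lmul s k u c) K \<gamma> = 0"
    proof (cases "\<exists>\<epsilon>. \<gamma> = \<epsilon> @ u'")
      case True
      then obtain \<epsilon> where d: "\<gamma> = \<epsilon> @ u'" by blast
      have "\<not> (\<exists>\<delta>. \<epsilon> = u @ \<delta>)" using False d by auto
      then show ?thesis using d by (simp add: rmul_def lmul_def)
    qed (simp add: rmul_def)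
    show ?thesis using L R by simp
  qed
qed

lemma lmul_diff: "lmul s k u (x - y) = lmul s k u x - lmul s k u y"
  unfolding lmul_def by (auto simp: fun_eq_iff algebra_simps)

lemma rmul_diff: "rmul s k u (x - y) = rmul s k u x - rmul s k u y"
  unfolding rmul_def by (auto simp: fun_eq_iff algebra_simps)

lemma lmul_add: "lmul s k u (x + y) = lmul s k u x + lmul s k u y"
  unfolding lmul_def by (auto simp: fun_eq_iff algebra_simps)

lemma rmul_add: "rmul s k u (x + y) = rmul s k u x + rmul s k u y"
  unfolding rmul_def by (auto simp: fun_eq_iff algebra_simps)

lemma lmul_zero[simp]: "lmul s k u 0 = 0" "lmul 0 k u c = 0"
  unfolding lmul_def by (auto simp: fun_eq_iff)

lemma rmul_zero[simp]: "rmul s k u 0 = 0" "rmul 0 k u c = 0"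
  unfolding rmul_def by (auto simp: fun_eq_iff)

lemma lmul_one: "lmul 1 0 [] c = c" and rmul_one: "rmul 1 0 [] c = c"
  unfolding lmul_def rmul_def by (auto simp: fun_eq_iff)

lemma lmul_scalar: "lmul s 0 [] c = (\<lambda>k \<alpha>. s * c k \<alpha>)"
  unfolding lmul_def by (auto simp: fun_eq_iff)

lemma lmul_mono: "lmul s k u (monom s' k' v) = monom (s * s') (k + k') (u @ v)"
  unfolding lmul_def monom_def by (auto simp: fun_eq_iff algebra_simps)

lemma rmul_mono: "rmul s k u (monom s' k' v) = monom (s' * s) (k' + k) (v @ u)"
  unfolding rmul_def monom_def by (auto simp: fun_eq_iff algebra_simps)

lemma mono_zero[simp]: "monom 0 k u = 0"
  unfolding monom_def by (auto simp: fun_eq_iff)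

lemma reindex_eq:
  fixes f :: "'a \<Rightarrow> 'c::{comm_monoid_add, t2_space}" and h :: "'b \<Rightarrow> 'a"
  assumes inj: "inj h" and out: "\<And>p. p \<notin> range h \<Longrightarrow> f p = 0"
  shows "f summable_on UNIV \<longleftrightarrow> (f \<circ> h) summable_on UNIV" and "infsum f UNIV = infsum (f \<circ> h) UNIV"
proof -
  have "f summable_on UNIV \<longleftrightarrow> f summable_on range h"
    by (rule summable_on_cong_neutral) (use out in auto)
  also have "\<dots> \<longleftrightarrow> (f \<circ> h) summable_on UNIV" by (rule summable_on_reindex[OF inj])
  finally show "f summable_on UNIV \<longleftrightarrow> (f \<circ> h) summable_on UNIV" .
  have "infsum f UNIV = infsum f (range h)"
    by (rule infsum_cong_neutral) (use out in auto)
  also have "\<dots> = infsum (f \<circ> h) UNIV" by (rule infsum_reindex[OF inj])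
  finally show "infsum f UNIV = infsum (f \<circ> h) UNIV" .
qed

lemma words_append: "u @ v \<in> words n \<longleftrightarrow> u \<in> words n \<and> v \<in> words n"
  unfolding words_def by auto

lemma lmul_alg:
  assumes gw: "goodW W" and c: "c \<in> alg n W" and u: "u \<in> words n"
  shows "lmul s k u c \<in> alg n W" and "\<And>w. w \<in> W \<Longrightarrow> wnorm w (lmul s k u c) \<le> norm s * w k u * wnorm w c"
proof -
  define h where "h = (\<lambda>(K'::int, \<delta>::nat list). (K' + k, u @ \<delta>))"
  have inj: "inj h" unfolding h_def inj_def by auto
  have out: "lmul s k u c K \<gamma> = 0" if "(K, \<gamma>) \<notin> range h" for K \<gamma>
  proof -
    have "\<not> (\<exists>\<delta>. \<gamma> = u @ \<delta>)"
    proof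
      assume "\<exists>\<delta>. \<gamma> = u @ \<delta>"
      then obtain \<delta> where "\<gamma> = u @ \<delta>" by blast
      then have "(K, \<gamma>) = h (K - k, \<delta>)" by (simp add: h_def)
      then show False using that by blast
    qed
    then show ?thesis by (simp add: lmul_def)
  qed
  have comp: "lmul s k u c (K' + k) (u @ \<delta>) = s * c K' \<delta>" for K' \<delta> by (simp add: lmul_def)
  have main: "(\<lambda>(K, \<gamma>). norm (lmul s k u c K \<gamma>) * w K \<gamma>) summable_on UNIV \<and>
      wnorm w (lmul s k u c) \<le> norm s * w k u * wnorm w c" if w: "w \<in> W" for w
  proof -
    let ?f = "\<lambda>(K, \<gamma>). norm (lmul s k u c K \<gamma>) * w K \<gamma>"
    let ?g = "\<lambda>(K', \<delta>). norm s * w k u * (norm (c K' \<delta>) * w K' \<delta>)"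
    have outf: "?f p = 0" if "p \<notin> range h" for p using out[of "fst p" "snd p"] that by (cases p) auto
    have g: "?g summable_on UNIV"
      using summable_on_cmult_right[OF alg_summ[OF c w], of "norm s * w k u"] by (simp add: case_prod_unfold)
    have le: "(?f \<circ> h) q \<le> ?g q" for q
    proof -
      obtain K' \<delta> where q: "q = (K', \<delta>)" by (cases q)
      have "w (k + K') (u @ \<delta>) \<le> w k u * w K' \<delta>" using goodWD(5)[OF gw w] by blast
      then have "norm s * norm (c K' \<delta>) * w (K' + k) (u @ \<delta>) \<le> norm s * norm (c K' \<delta>) * (w k u * w K' \<delta>)"
        by (simp add: add.commute mult_left_mono)
      then show ?thesis by (simp add: q h_def comp norm_mult algebra_simps)
    qed
    have nn: "0 \<le> (?f \<circ> h) q" for q using wnn[OF gw w] by (cases q) (auto simp: h_def)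
    have fh: "(?f \<circ> h) summable_on UNIV" by (rule summable_on_comparison_test[OF g le nn])
    have s1: "?f summable_on UNIV" using reindex_eq(1)[of h ?f, OF inj outf] fh by blast
    have "wnorm w (lmul s k u c) = infsum (?f \<circ> h) UNIV"
      unfolding wnorm_def by (rule reindex_eq(2)[OF inj outf])
    also have "\<dots> \<le> infsum ?g UNIV" by (rule infsum_mono[OF fh g le])
    also have "\<dots> = norm s * w k u * wnorm w c"
      unfolding wnorm_def by (simp add: case_prod_unfold infsum_cmult_right')
    finally show ?thesis using s1 by blast
  qed
  show "lmul s k u c \<in> alg n W"
  proof (rule algI)
    fix K \<gamma> assume g: "\<gamma> \<notin> words n"
    show "lmul s k u c K \<gamma> = 0"
    proof (cases "\<exists>\<delta>. \<gamma> = u @ \<delta>")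
      case True
      then obtain \<delta> where d: "\<gamma> = u @ \<delta>" by blast
      then have "\<delta> \<notin> words n" using g u words_append by blast
      then show ?thesis using d algD[OF c] by (simp add: lmul_def)
    qed (simp add: lmul_def)
  qed (use main in blast)
  show "\<And>w. w \<in> W \<Longrightarrow> wnorm w (lmul s k u c) \<le> norm s * w k u * wnorm w c" using main by blast
qed

lemma rmul_alg:
  assumes gw: "goodW W" and c: "c \<in> alg n W" and u: "u \<in> words n"
  shows "rmul s k u c \<in> alg n W" and "\<And>w. w \<in> W \<Longrightarrow> wnorm w (rmul s k u c) \<le> norm s * w k u * wnorm w c"
proof -
  define h where "h = (\<lambda>(K'::int, \<delta>::nat list). (K' + k, \<delta> @ u))"
  have inj: "inj h" unfolding h_def inj_def by auto
  have out: "rmul s k u c K \<gamma> = 0" if "(K, \<gamma>) \<notin> range h" for K \<gamma>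
  proof -
    have "\<not> (\<exists>\<delta>. \<gamma> = \<delta> @ u)"
    proof
      assume "\<exists>\<delta>. \<gamma> = \<delta> @ u"
      then obtain \<delta> where "\<gamma> = \<delta> @ u" by blast
      then have "(K, \<gamma>) = h (K - k, \<delta>)" by (simp add: h_def)
      then show False using that by blast
    qed
    then show ?thesis by (simp add: rmul_def)
  qed
  have comp: "rmul s k u c (K' + k) (\<delta> @ u) = c K' \<delta> * s" for K' \<delta> by (simp add: rmul_def)
  have main: "(\<lambda>(K, \<gamma>). norm (rmul s k u c K \<gamma>) * w K \<gamma>) summable_on UNIV \<and>
      wnorm w (rmul s k u c) \<le> norm s * w k u * wnorm w c" if w: "w \<in> W" for w
  proof -
    let ?f = "\<lambda>(K, \<gamma>). norm (rmul s k u c K \<gamma>) * w K \<gamma>"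
    let ?g = "\<lambda>(K', \<delta>). norm s * w k u * (norm (c K' \<delta>) * w K' \<delta>)"
    have outf: "?f p = 0" if "p \<notin> range h" for p using out[of "fst p" "snd p"] that by (cases p) auto
    have g: "?g summable_on UNIV"
      using summable_on_cmult_right[OF alg_summ[OF c w], of "norm s * w k u"] by (simp add: case_prod_unfold)
    have le: "(?f \<circ> h) q \<le> ?g q" for q
    proof -
      obtain K' \<delta> where q: "q = (K', \<delta>)" by (cases q)
      have "w (K' + k) (\<delta> @ u) \<le> w K' \<delta> * w k u" using goodWD(5)[OF gw w] by blast
      then have "norm s * norm (c K' \<delta>) * w (K' + k) (\<delta> @ u) \<le> norm s * norm (c K' \<delta>) * (w K' \<delta> * w k u)"
        by (simp add: mult_left_mono)
      then show ?thesis by (simp add: q h_def comp norm_mult algebra_simps)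
    qed
    have nn: "0 \<le> (?f \<circ> h) q" for q using wnn[OF gw w] by (cases q) (auto simp: h_def)
    have fh: "(?f \<circ> h) summable_on UNIV" by (rule summable_on_comparison_test[OF g le nn])
    have s1: "?f summable_on UNIV" using reindex_eq(1)[of h ?f, OF inj outf] fh by blast
    have "wnorm w (rmul s k u c) = infsum (?f \<circ> h) UNIV"
      unfolding wnorm_def by (rule reindex_eq(2)[OF inj outf])
    also have "\<dots> \<le> infsum ?g UNIV" by (rule infsum_mono[OF fh g le])
    also have "\<dots> = norm s * w k u * wnorm w c"
      unfolding wnorm_def by (simp add: case_prod_unfold infsum_cmult_right')
    finally show ?thesis using s1 by blast
  qed
  show "rmul s k u c \<in> alg n W"
  proof (rule algI)
    fix K \<gamma> assume g: "\<gamma> \<notin> words n"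
    show "rmul s k u c K \<gamma> = 0"
    proof (cases "\<exists>\<delta>. \<gamma> = \<delta> @ u")
      case True
      then obtain \<delta> where d: "\<gamma> = \<delta> @ u" by blast
      then have "\<delta> \<notin> words n" using g u words_append by blast
      then show ?thesis using d algD[OF c] by (simp add: rmul_def)
    qed (simp add: rmul_def)
  qed (use main in blast)
  show "\<And>w. w \<in> W \<Longrightarrow> wnorm w (rmul s k u c) \<le> norm s * w k u * wnorm w c" using main by blast
qed

lemma slice_summable:
  assumes gw: "goodW W" and a: "a \<in> alg n W" and c: "c \<in> alg n W"
  shows "(\<lambda>k. a k \<beta> * c (K - k) \<delta>) summable_on UNIV"
proof -
  obtain w0 where w0: "w0 \<in> W" using goodWD(1)[OF gw] by blast
  have sa: "(\<lambda>k. norm (a k \<beta>) * w0 k \<beta>) summable_on UNIV"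
  proof -
    have "(\<lambda>(k, \<alpha>). norm (a k \<alpha>) * w0 k \<alpha>) summable_on range (\<lambda>k. (k, \<beta>))"
      by (rule summable_on_subset[OF alg_summ[OF a w0]]) simp
    then show ?thesis using summable_on_reindex[of "\<lambda>k. (k, \<beta>)" UNIV "\<lambda>(k, \<alpha>). norm (a k \<alpha>) * w0 k \<alpha>"] by (simp add: inj_def o_def)
  qed
  define C where "C = wnorm w0 c / w0 0 \<delta> / w0 0 \<beta>"
  have bound: "norm (a k \<beta> * c (K - k) \<delta>) \<le> C * (norm (a k \<beta>) * w0 k \<beta>)" for k
  proof -
    have p1: "0 < w0 0 \<delta>" "w0 0 \<delta> \<le> w0 (K - k) \<delta>" "0 < w0 0 \<beta>" "w0 0 \<beta> \<le> w0 k \<beta>"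
      using goodWD(2,3)[OF gw w0] by auto
    have wn: "0 \<le> wnorm w0 c" by (rule wnorm_nonneg[OF gw w0])
    have c1: "norm (c (K - k) \<delta>) \<le> wnorm w0 c / w0 0 \<delta>"
    proof -
      have "norm (c (K - k) \<delta>) \<le> wnorm w0 c / w0 (K - k) \<delta>" by (rule coef_bound[OF gw c w0])
      also have "\<dots> \<le> wnorm w0 c / w0 0 \<delta>" using p1 wn by (intro divide_left_mono) auto
      finally show ?thesis .
    qed
    have a1: "norm (a k \<beta>) \<le> norm (a k \<beta>) * w0 k \<beta> / w0 0 \<beta>"
    proof -
      have "1 \<le> w0 k \<beta> / w0 0 \<beta>" using p1 by simp
      then have "norm (a k \<beta>) * 1 \<le> norm (a k \<beta>) * (w0 k \<beta> / w0 0 \<beta>)" by (intro mult_left_mono) auto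
      then show ?thesis by simp
    qed
    have "norm (a k \<beta> * c (K - k) \<delta>) = norm (a k \<beta>) * norm (c (K - k) \<delta>)" by (simp add: norm_mult)
    also have "\<dots> \<le> (norm (a k \<beta>) * w0 k \<beta> / w0 0 \<beta>) * (wnorm w0 c / w0 0 \<delta>)"
      by (rule mult_mono[OF a1 c1]) (use p1 wn in auto)
    also have "\<dots> = C * (norm (a k \<beta>) * w0 k \<beta>)" by (simp add: C_def field_simps)
    finally show ?thesis .
  qed
  have "(\<lambda>k. norm (a k \<beta> * c (K - k) \<delta>)) summable_on UNIV"
    by (rule summable_on_comparison_test[OF summable_on_cmult_right[OF sa, of C]]) (use bound in auto)
  then show ?thesis by (rule abs_summable_summable)
qed

lemma cmul_decomp_left:
  assumes gw: "goodW W" and a: "a \<in> alg n W" and c: "c \<in> alg n W"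
  shows "cmul a c K \<gamma> = (\<Sum>\<^sub>\<infinity>p. lmul (a (fst p) (snd p)) (fst p) (snd p) c K \<gamma>)"
proof -
  define L where "L = length \<gamma>"
  define g where "g i k = a k (take i \<gamma>) * c (K - k) (drop i \<gamma>)" for i k
  have gs: "(g i) summable_on UNIV" for i unfolding g_def by (rule slice_summable[OF gw a c])
  have lhs: "cmul a c K \<gamma> = (\<Sum>i\<le>L. \<Sum>\<^sub>\<infinity>k. g i k)"
  proof -
    have "cmul a c K \<gamma> = (\<Sum>\<^sub>\<infinity>k. \<Sum>i\<le>L. g i k)" unfolding cmul_def g_def L_def ..
    also have "\<dots> = (\<Sum>i\<le>L. \<Sum>\<^sub>\<infinity>k. g i k)" using sum_infsum_swap[of "{..L}" g UNIV] gs by simp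
    finally show ?thesis .
  qed
  define G where "G i p = (if snd p = take i \<gamma> then g i (fst p) else 0)" for i p
  have pt: "lmul (a (fst p) (snd p)) (fst p) (snd p) c K \<gamma> = (\<Sum>i\<le>L. G i p)" for p
  proof -
    obtain k \<beta> where p: "p = (k, \<beta>)" by (cases p)
    have "(\<Sum>i\<le>L. G i p) = (\<Sum>i\<le>L. if i = length \<beta> then (if \<exists>\<delta>. \<gamma> = \<beta> @ \<delta> then a k \<beta> * c (K - k) (drop (length \<beta>) \<gamma>) else 0) else 0)"
    proof (rule sum.cong[OF refl])
      fix i assume i: "i \<in> {..L}"
      show "G i p = (if i = length \<beta> then (if \<exists>\<delta>. \<gamma> = \<beta> @ \<delta> then a k \<beta> * c (K - k) (drop (length \<beta>) \<gamma>) else 0) else 0)"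
      proof (cases "\<beta> = take i \<gamma>")
        case True
        then have "length \<beta> = i" using i by (simp add: L_def)
        moreover have "\<exists>\<delta>. \<gamma> = \<beta> @ \<delta>" using True by (metis append_take_drop_id)
        ultimately show ?thesis using True by (auto simp: G_def g_def p)
      next
        case False
        have "\<not> (i = length \<beta> \<and> (\<exists>\<delta>. \<gamma> = \<beta> @ \<delta>))" using False by auto
        then show ?thesis using False by (auto simp: G_def g_def p)
      qed
    qed
    also have "\<dots> = lmul (a (fst p) (snd p)) (fst p) (snd p) c K \<gamma>"
      by (auto simp: sum.delta' lmul_def p L_def)
    finally show ?thesis by simp
  qed
  have Gi: "(G i) summable_on UNIV \<and> infsum (G i) UNIV = infsum (g i) UNIV" for i
  proof -
    define h where "h = (\<lambda>k::int. (k, take i \<gamma>))"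
    have inj: "inj h" by (simp add: h_def inj_def)
    have out: "G i p = 0" if "p \<notin> range h" for p
    proof -
      have "snd p \<noteq> take i \<gamma>"
      proof
        assume "snd p = take i \<gamma>"
        then have "p = h (fst p)" by (cases p) (simp add: h_def)
        then show False using that by blast
      qed
      then show ?thesis by (simp add: G_def)
    qed
    have comp: "G i \<circ> h = g i" by (simp add: fun_eq_iff G_def h_def)
    show ?thesis using reindex_eq[of h "G i", OF inj out] gs comp by simp
  qed
  have "(\<Sum>\<^sub>\<infinity>p. lmul (a (fst p) (snd p)) (fst p) (snd p) c K \<gamma>) = (\<Sum>\<^sub>\<infinity>p. \<Sum>i\<le>L. G i p)" by (simp add: pt)
  also have "\<dots> = (\<Sum>i\<le>L. infsum (G i) UNIV)" using sum_infsum_swap[of "{..L}" G UNIV] Gi by simp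
  also have "\<dots> = (\<Sum>i\<le>L. \<Sum>\<^sub>\<infinity>k. g i k)" using Gi by simp
  finally show ?thesis using lhs by simp
qed

lemma cmul_decomp_right:
  assumes gw: "goodW W" and a: "a \<in> alg n W" and c: "c \<in> alg n W"
  shows "cmul c a K \<gamma> = (\<Sum>\<^sub>\<infinity>p. rmul (a (fst p) (snd p)) (fst p) (snd p) c K \<gamma>)"
proof -
  define L where "L = length \<gamma>"
  define g where "g i k = c (K - k) (take i \<gamma>) * a k (drop i \<gamma>)" for i k
  have gs: "(g i) summable_on UNIV" for i
    unfolding g_def using slice_summable[OF gw a c] by (simp add: mult.commute)
  have lhs: "cmul c a K \<gamma> = (\<Sum>i\<le>L. \<Sum>\<^sub>\<infinity>k. g i k)"
  proof -
    define f where "f j = (\<Sum>i\<le>L. c j (take i \<gamma>) * a (K - j) (drop i \<gamma>))" for j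
    define h where "h = (\<lambda>k::int. K - k)"
    have inj: "inj h" by (simp add: h_def inj_def)
    have out: "f p = 0" if "p \<notin> range h" for p
    proof -
      have "p = h (K - p)" by (simp add: h_def)
      then show ?thesis using that by blast
    qed
    have "cmul c a K \<gamma> = infsum f UNIV" unfolding cmul_def f_def L_def ..
    also have "\<dots> = infsum (f \<circ> h) UNIV" by (rule reindex_eq(2)[of h f, OF inj out])
    also have "f \<circ> h = (\<lambda>k. \<Sum>i\<le>L. g i k)" by (simp add: fun_eq_iff f_def h_def g_def)
    also have "infsum (\<lambda>k. \<Sum>i\<le>L. g i k) UNIV = (\<Sum>i\<le>L. \<Sum>\<^sub>\<infinity>k. g i k)"
      using sum_infsum_swap[of "{..L}" g UNIV] gs by simp
    finally show ?thesis .
  qed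
  define G where "G i p = (if snd p = drop i \<gamma> then g i (fst p) else 0)" for i p
  have pt: "rmul (a (fst p) (snd p)) (fst p) (snd p) c K \<gamma> = (\<Sum>i\<le>L. G i p)" for p
  proof -
    obtain k \<beta> where p: "p = (k, \<beta>)" by (cases p)
    have "(\<Sum>i\<le>L. G i p) = (\<Sum>i\<le>L. if i = L - length \<beta> then (if \<exists>\<epsilon>. \<gamma> = \<epsilon> @ \<beta> then c (K - k) (take (L - length \<beta>) \<gamma>) * a k \<beta> else 0) else 0)"
    proof (rule sum.cong[OF refl])
      fix i assume i: "i \<in> {..L}"
      show "G i p = (if i = L - length \<beta> then (if \<exists>\<epsilon>. \<gamma> = \<epsilon> @ \<beta> then c (K - k) (take (L - length \<beta>) \<gamma>) * a k \<beta> else 0) else 0)"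
      proof (cases "\<beta> = drop i \<gamma>")
        case True
        then have "i = L - length \<beta>" using i by (simp add: L_def)
        moreover have "\<exists>\<epsilon>. \<gamma> = \<epsilon> @ \<beta>" using True by (metis append_take_drop_id)
        ultimately show ?thesis using True by (auto simp: G_def g_def p)
      next
        case False
        have "\<not> (i = L - length \<beta> \<and> (\<exists>\<epsilon>. \<gamma> = \<epsilon> @ \<beta>))" using False by (auto simp: L_def)
        then show ?thesis using False by (auto simp: G_def g_def p)
      qed
    qed
    also have "\<dots> = rmul (a (fst p) (snd p)) (fst p) (snd p) c K \<gamma>"
      by (auto simp: sum.delta' rmul_def p L_def)
    finally show ?thesis by simp
  qed
  have Gi: "(G i) summable_on UNIV \<and> infsum (G i) UNIV = infsum (g i) UNIV" for i
  proof -
    define h where "h = (\<lambda>k::int. (k, drop i \<gamma>))"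
    have inj: "inj h" by (simp add: h_def inj_def)
    have out: "G i p = 0" if "p \<notin> range h" for p
    proof -
      have "snd p \<noteq> drop i \<gamma>"
      proof
        assume "snd p = drop i \<gamma>"
        then have "p = h (fst p)" by (cases p) (simp add: h_def)
        then show False using that by blast
      qed
      then show ?thesis by (simp add: G_def)
    qed
    have comp: "G i \<circ> h = g i" by (simp add: fun_eq_iff G_def h_def)
    show ?thesis using reindex_eq[of h "G i", OF inj out] gs comp by simp
  qed
  have "(\<Sum>\<^sub>\<infinity>p. rmul (a (fst p) (snd p)) (fst p) (snd p) c K \<gamma>) = (\<Sum>\<^sub>\<infinity>p. \<Sum>i\<le>L. G i p)" by (simp add: pt)
  also have "\<dots> = (\<Sum>i\<le>L. infsum (G i) UNIV)" using sum_infsum_swap[of "{..L}" G UNIV] Gi by simp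
  also have "\<dots> = (\<Sum>i\<le>L. \<Sum>\<^sub>\<infinity>k. g i k)" using Gi by simp
  finally show ?thesis using lhs by simp
qed

lemma ideal_left:
  assumes gw: "goodW W" and cl: "closedin (seminorm_topology (alg n W) (wnorm ` W)) I"
    and IA: "I \<subseteq> alg n W" and I0: "0 \<in> I" and Iadd: "\<And>x y. x \<in> I \<Longrightarrow> y \<in> I \<Longrightarrow> x + y \<in> I"
    and Il: "\<And>s k u x. u \<in> words n \<Longrightarrow> x \<in> I \<Longrightarrow> lmul s k u x \<in> I"
    and a: "a \<in> alg n W" and x: "x \<in> I"
  shows "cmul a x \<in> I"
proof -
  have xA: "x \<in> alg n W" using IA x by blast
  define t where "t p = lmul (a (fst p) (snd p)) (fst p) (snd p) x" for p :: "int \<times> nat list"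
  have tI: "t p \<in> I" for p
  proof (cases "snd p \<in> words n")
    case True then show ?thesis using Il[OF True x] by (simp add: t_def)
  next
    case False then have "a (fst p) (snd p) = 0" using algD[OF a] by blast
    then show ?thesis using I0 by (simp add: t_def)
  qed
  have tA: "t p \<in> alg n W" for p using tI IA by blast
  have sm: "(\<lambda>p. wnorm w (t p)) summable_on UNIV" if w: "w \<in> W" for w
  proof (rule summable_on_comparison_test)
    show "(\<lambda>p. (case p of (k, \<alpha>) \<Rightarrow> norm (a k \<alpha>) * w k \<alpha>) * wnorm w x) summable_on UNIV"
      by (rule summable_on_cmult_left[OF alg_summ[OF a w]])
    fix p :: "int \<times> nat list"
    obtain k \<beta> where p: "p = (k, \<beta>)" by (cases p)
    show "wnorm w (t p) \<le> (case p of (k, \<alpha>) \<Rightarrow> norm (a k \<alpha>) * w k \<alpha>) * wnorm w x"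
    proof (cases "\<beta> \<in> words n")
      case True then show ?thesis using lmul_alg(2)[OF gw xA True w, of "a k \<beta>" k] by (simp add: t_def p)
    next
      case False then have "a k \<beta> = 0" using algD[OF a] by blast
      then show ?thesis using wnorm_nonneg[OF gw w] wnn[OF gw w] by (simp add: t_def p wnorm_zero)
    qed
    show "0 \<le> wnorm w (t p)" by (rule wnorm_nonneg[OF gw w])
  qed
  have "(\<lambda>k \<alpha>. \<Sum>\<^sub>\<infinity>p. t p k \<alpha>) \<in> I" by (rule abs_sum_closed[OF gw tA sm cl I0 Iadd tI])
  moreover have "(\<lambda>k \<alpha>. \<Sum>\<^sub>\<infinity>p. t p k \<alpha>) = cmul a x"
    by (intro ext) (simp add: t_def cmul_decomp_left[OF gw a xA])
  ultimately show ?thesis by simp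
qed

lemma ideal_right:
  assumes gw: "goodW W" and cl: "closedin (seminorm_topology (alg n W) (wnorm ` W)) I"
    and IA: "I \<subseteq> alg n W" and I0: "0 \<in> I" and Iadd: "\<And>x y. x \<in> I \<Longrightarrow> y \<in> I \<Longrightarrow> x + y \<in> I"
    and Ir: "\<And>s k u x. u \<in> words n \<Longrightarrow> x \<in> I \<Longrightarrow> rmul s k u x \<in> I"
    and a: "a \<in> alg n W" and x: "x \<in> I"
  shows "cmul x a \<in> I"
proof -
  have xA: "x \<in> alg n W" using IA x by blast
  define t where "t p = rmul (a (fst p) (snd p)) (fst p) (snd p) x" for p :: "int \<times> nat list"
  have tI: "t p \<in> I" for p
  proof (cases "snd p \<in> words n")
    case True then show ?thesis using Ir[OF True x] by (simp add: t_def)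
  next
    case False then have "a (fst p) (snd p) = 0" using algD[OF a] by blast
    then show ?thesis using I0 by (simp add: t_def)
  qed
  have tA: "t p \<in> alg n W" for p using tI IA by blast
  have sm: "(\<lambda>p. wnorm w (t p)) summable_on UNIV" if w: "w \<in> W" for w
  proof (rule summable_on_comparison_test)
    show "(\<lambda>p. (case p of (k, \<alpha>) \<Rightarrow> norm (a k \<alpha>) * w k \<alpha>) * wnorm w x) summable_on UNIV"
      by (rule summable_on_cmult_left[OF alg_summ[OF a w]])
    fix p :: "int \<times> nat list"
    obtain k \<beta> where p: "p = (k, \<beta>)" by (cases p)
    show "wnorm w (t p) \<le> (case p of (k, \<alpha>) \<Rightarrow> norm (a k \<alpha>) * w k \<alpha>) * wnorm w x"
    proof (cases "\<beta> \<in> words n")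
      case True then show ?thesis using rmul_alg(2)[OF gw xA True w, of "a k \<beta>" k] by (simp add: t_def p)
    next
      case False then have "a k \<beta> = 0" using algD[OF a] by blast
      then show ?thesis using wnorm_nonneg[OF gw w] wnn[OF gw w] by (simp add: t_def p wnorm_zero)
    qed
    show "0 \<le> wnorm w (t p)" by (rule wnorm_nonneg[OF gw w])
  qed
  have "(\<lambda>k \<alpha>. \<Sum>\<^sub>\<infinity>p. t p k \<alpha>) \<in> I" by (rule abs_sum_closed[OF gw tA sm cl I0 Iadd tI])
  moreover have "(\<lambda>k \<alpha>. \<Sum>\<^sub>\<infinity>p. t p k \<alpha>) = cmul x a"
    by (intro ext) (simp add: t_def cmul_decomp_right[OF gw a xA])
  ultimately show ?thesis by simp
qed

lemma alg_closed: "goodW W \<Longrightarrow> closedin (seminorm_topology (alg n W) (wnorm ` W)) (alg n W)"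
  using closedin_topspace[of "seminorm_topology (alg n W) (wnorm ` W)"] topspace_semi[OF semi_ok_alg] by simp

lemma alg_cmul:
  assumes gw: "goodW W" and a: "a \<in> alg n W" and c: "c \<in> alg n W"
  shows "cmul a c \<in> alg n W"
  by (rule ideal_left[OF gw alg_closed[OF gw] subset_refl alg_zero _ _ a c])
     (auto intro: alg_add[OF gw] lmul_alg(1)[OF gw])

fun sw :: "nat list \<Rightarrow> nat" where
  "sw (x # y # xs) = (if x = y then 0 else 1) + sw (y # xs)"
| "sw _ = 0"

lemma card_sw: "card {i. Suc i < length \<alpha> \<and> \<alpha> ! i \<noteq> \<alpha> ! Suc i} = sw \<alpha>"
proof (induction \<alpha> rule: sw.induct)
  case (1 x y xs)
  let ?S = "{i. Suc i < length (y # xs) \<and> (y # xs) ! i \<noteq> (y # xs) ! Suc i}"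
  have eq: "{i. Suc i < length (x # y # xs) \<and> (x # y # xs) ! i \<noteq> (x # y # xs) ! Suc i} = {i. i = 0 \<and> x \<noteq> y} \<union> Suc ` ?S"
  proof (intro set_eqI)
    fix i show "i \<in> {i. Suc i < length (x # y # xs) \<and> (x # y # xs) ! i \<noteq> (x # y # xs) ! Suc i} \<longleftrightarrow> i \<in> {i. i = 0 \<and> x \<noteq> y} \<union> Suc ` ?S"
      by (cases i) (auto simp: image_iff)
  qed
  have fin: "finite ?S" by (rule finite_subset[of _ "{..<length (y # xs)}"]) auto
  have cS: "card (Suc ` ?S) = card ?S" by (rule card_image) simp
  show ?case
  proof (cases "x = y")
    case True
    then have "{i. i = 0 \<and> x \<noteq> y} \<union> Suc ` ?S = Suc ` ?S" by simp
    then show ?thesis using eq cS 1 True by simp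
  next
    case False
    then have "{i. i = 0 \<and> x \<noteq> y} \<union> Suc ` ?S = insert 0 (Suc ` ?S)" by auto
    moreover have "card (insert 0 (Suc ` ?S)) = Suc (card (Suc ` ?S))"
      by (rule card_insert_disjoint) (use fin in auto)
    ultimately show ?thesis using eq cS 1 False by simp
  qed
next
  case "2_1" then show ?case by simp
next
  case ("2_2" v) then show ?case by simp
qed

lemma switches_sw: "switches \<alpha> = (if \<alpha> = [] then -1 else int (sw \<alpha>))"
proof (cases "length \<alpha> \<le> 1")
  case True
  then have "\<alpha> = [] \<or> (\<exists>x. \<alpha> = [x])" by (cases \<alpha>) auto
  then show ?thesis unfolding switches_def by auto
next
  case False
  then show ?thesis unfolding switches_def using card_sw[of \<alpha>] by auto
qed

lemma sw_append: "sw (\<alpha> @ \<beta>) \<le> sw \<alpha> + sw \<beta> + 1"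
proof (induction \<alpha> rule: sw.induct)
  case (1 x y xs) then show ?case by simp
next
  case "2_1" then show ?case by simp
next
  case ("2_2" v) then show ?case by (cases \<beta>) auto
qed

lemma sw_append_ge: "sw \<alpha> + sw \<beta> \<le> sw (\<alpha> @ \<beta>)"
proof (induction \<alpha> rule: sw.induct)
  case (1 x y xs) then show ?case by simp
next
  case "2_1" then show ?case by simp
next
  case ("2_2" v) then show ?case by (cases \<beta>) auto
qed

lemma switches_ge: "switches \<alpha> \<ge> -1"
  by (simp add: switches_sw)

lemma switches_append: "switches (\<alpha> @ \<beta>) \<le> switches \<alpha> + switches \<beta> + 1"
  using sw_append[of \<alpha> \<beta>] by (auto simp: switches_sw)

definition WT :: "ereal \<Rightarrow> (int \<Rightarrow> nat list \<Rightarrow> real) set" where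
  "WT r = {wT \<rho> R | \<rho> R. 0 < \<rho> \<and> ereal \<rho> < r \<and> 1 \<le> R}"

definition WF :: "ereal \<Rightarrow> (int \<Rightarrow> nat list \<Rightarrow> real) set" where
  "WF r = {wF \<rho> \<tau> R | \<rho> \<tau> R. 0 < \<rho> \<and> ereal \<rho> < r \<and> 1 \<le> \<tau> \<and> 1 \<le> R}"

lemma OT_eq: "OT_alg n r = alg n (WT r)"
  unfolding OT_alg_def alg_def WT_def by blast

lemma OF_eq: "OF_alg n r = alg n (WF r)"
  unfolding OF_alg_def alg_def WF_def by blast

lemma normsT_eq: "normsT r = wnorm ` WT r"
  unfolding normsT_def WT_def by blast

lemma normsF_eq: "normsF r = wnorm ` WF r"
  unfolding normsF_def WF_def by blast

lemma XT_eq: "XT n r = seminorm_topology (alg n (WT r)) (wnorm ` WT r)"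
  unfolding XT_def OT_eq normsT_eq ..

lemma XF_eq: "XF n r = seminorm_topology (alg n (WF r)) (wnorm ` WF r)"
  unfolding XF_def OF_eq normsF_eq ..

lemma exists_rho: "0 < r \<Longrightarrow> \<exists>\<rho>. 0 < \<rho> \<and> ereal \<rho> < r"
  using ereal_dense2[of 0 r] by (auto simp: zero_ereal_def)

lemma pow_nat_abs_add: "(1::real) \<le> R \<Longrightarrow> R ^ nat \<bar>k + l\<bar> \<le> R ^ nat \<bar>k\<bar> * R ^ nat \<bar>l\<bar>"
  by (subst power_add[symmetric]) (rule power_increasing, auto)

lemma goodW_WT:
  assumes r: "0 < r"
  shows "goodW (WT r)"
  unfolding goodW_def
proof (intro conjI ballI allI)
  obtain \<rho> where "0 < \<rho>" "ereal \<rho> < r" using exists_rho[OF r] by blast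
  then show "WT r \<noteq> {}" unfolding WT_def by blast
next
  fix w k \<alpha> assume "w \<in> WT r"
  then obtain \<rho> R where w: "w = wT \<rho> R" "0 < \<rho>" "1 \<le> R" unfolding WT_def by blast
  show "0 < w 0 \<alpha>" using w by (simp add: wT_def)
  show "w 0 \<alpha> \<le> w k \<alpha>" using w by (simp add: wT_def)
next
  fix w1 w2 assume "w1 \<in> WT r" "w2 \<in> WT r"
  then obtain \<rho>1 R1 \<rho>2 R2 where w: "w1 = wT \<rho>1 R1" "0 < \<rho>1" "ereal \<rho>1 < r" "1 \<le> R1"
     "w2 = wT \<rho>2 R2" "0 < \<rho>2" "ereal \<rho>2 < r" "1 \<le> R2" unfolding WT_def by blast
  have m: "wT (max \<rho>1 \<rho>2) (max R1 R2) \<in> WT r"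
    unfolding WT_def using w by (auto simp: max_def)
  show "\<exists>w3\<in>WT r. \<forall>k \<alpha>. w1 k \<alpha> \<le> w3 k \<alpha> \<and> w2 k \<alpha> \<le> w3 k \<alpha>"
    using w by (intro bexI[OF _ m]) (auto simp: wT_def intro!: mult_mono power_mono)
next
  fix w and k l :: int and \<alpha> \<beta> :: "nat list" assume "w \<in> WT r"
  then obtain \<rho> R where w: "w = wT \<rho> R" "0 < \<rho>" "1 \<le> R" unfolding WT_def by blast
  have "\<rho> ^ length (\<alpha> @ \<beta>) * R ^ nat \<bar>k + l\<bar> \<le> \<rho> ^ length (\<alpha> @ \<beta>) * (R ^ nat \<bar>k\<bar> * R ^ nat \<bar>l\<bar>)"
    using w pow_nat_abs_add[of R k l] by (intro mult_left_mono) auto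
  then show "w (k + l) (\<alpha> @ \<beta>) \<le> w k \<alpha> * w l \<beta>"
    using w by (simp add: wT_def power_add algebra_simps)
qed

lemma tau_pow_ge1:
  assumes "1 \<le> (\<tau>::real)" shows "1 \<le> \<tau> powr (of_int (switches \<alpha> + 1))"
  by (rule ge_one_powr_ge_zero[OF assms]) (use switches_ge[of \<alpha>] in auto)

lemma goodW_WF:
  assumes r: "0 < r"
  shows "goodW (WF r)"
  unfolding goodW_def
proof (intro conjI ballI allI)
  obtain \<rho> where "0 < \<rho>" "ereal \<rho> < r" using exists_rho[OF r] by blast
  then show "WF r \<noteq> {}" unfolding WF_def by blast
next
  fix w k \<alpha> assume "w \<in> WF r"
  then obtain \<rho> \<tau> R where w: "w = wF \<rho> \<tau> R" "0 < \<rho>" "1 \<le> \<tau>" "1 \<le> R" unfolding WF_def by blast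
  show "0 < w 0 \<alpha>" using w by (simp add: wF_def)
  show "w 0 \<alpha> \<le> w k \<alpha>" using w tau_pow_ge1[of \<tau> \<alpha>] by (simp add: wF_def)
next
  fix w1 w2 assume "w1 \<in> WF r" "w2 \<in> WF r"
  then obtain \<rho>1 \<tau>1 R1 \<rho>2 \<tau>2 R2 where w: "w1 = wF \<rho>1 \<tau>1 R1" "0 < \<rho>1" "ereal \<rho>1 < r" "1 \<le> \<tau>1" "1 \<le> R1"
     "w2 = wF \<rho>2 \<tau>2 R2" "0 < \<rho>2" "ereal \<rho>2 < r" "1 \<le> \<tau>2" "1 \<le> R2" unfolding WF_def by blast
  have m: "wF (max \<rho>1 \<rho>2) (max \<tau>1 \<tau>2) (max R1 R2) \<in> WF r"
    unfolding WF_def using w by (auto simp: max_def)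
  have e: "0 \<le> real_of_int (switches \<alpha> + 1)" for \<alpha> using switches_ge[of \<alpha>] by simp
  show "\<exists>w3\<in>WF r. \<forall>k \<alpha>. w1 k \<alpha> \<le> w3 k \<alpha> \<and> w2 k \<alpha> \<le> w3 k \<alpha>"
    using w e by (intro bexI[OF _ m]) (auto simp: wF_def intro!: mult_mono power_mono powr_mono2)
next
  fix w and k l :: int and \<alpha> \<beta> :: "nat list" assume "w \<in> WF r"
  then obtain \<rho> \<tau> R where w: "w = wF \<rho> \<tau> R" "0 < \<rho>" "1 \<le> \<tau>" "1 \<le> R" unfolding WF_def by blast
  define pa where "pa = \<tau> powr (of_int (switches \<alpha> + 1))"
  define pb where "pb = \<tau> powr (of_int (switches \<beta> + 1))"
  define pab where "pab = \<tau> powr (of_int (switches (\<alpha> @ \<beta>) + 1))"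
  have t: "pab \<le> pa * pb"
  proof -
    have "\<tau> powr (of_int (switches (\<alpha> @ \<beta>) + 1)) \<le> \<tau> powr (of_int (switches \<alpha> + 1) + of_int (switches \<beta> + 1))"
      using switches_append[of \<alpha> \<beta>] w(3) by (intro powr_mono) auto
    then show ?thesis unfolding pa_def pb_def pab_def by (simp only: powr_add)
  qed
  have pab0: "0 \<le> pab" unfolding pab_def by simp
  have "\<rho> ^ length (\<alpha> @ \<beta>) * pab * R ^ nat \<bar>k + l\<bar> \<le> \<rho> ^ length (\<alpha> @ \<beta>) * (pa * pb) * (R ^ nat \<bar>k\<bar> * R ^ nat \<bar>l\<bar>)"
    using w t pab0 pow_nat_abs_add[of R k l] by (intro mult_mono) auto
  also have "\<dots> = (\<rho> ^ length \<alpha> * pa * R ^ nat \<bar>k\<bar>) * (\<rho> ^ length \<beta> * pb * R ^ nat \<bar>l\<bar>)"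
    by (simp add: power_add mult_ac)
  finally show "w (k + l) (\<alpha> @ \<beta>) \<le> w k \<alpha> * w l \<beta>"
    unfolding w wF_def pa_def[symmetric] pb_def[symmetric] pab_def[symmetric] .
qed

lemma wT_le_wF: "1 \<le> \<tau> \<Longrightarrow> 0 < \<rho> \<Longrightarrow> 1 \<le> R \<Longrightarrow> wT \<rho> R k \<alpha> \<le> wF \<rho> \<tau> R k \<alpha>"
  using tau_pow_ge1[of \<tau> \<alpha>] by (simp add: wT_def wF_def)

section \<open>Inversions\<close>

fun ninv :: "nat list \<Rightarrow> nat" where
  "ninv [] = 0"
| "ninv (x # xs) = length (filter (\<lambda>y. y < x) xs) + ninv xs"

definition cross :: "nat list \<Rightarrow> nat list \<Rightarrow> nat" where
  "cross xs ys = sum_list (map (\<lambda>x. length (filter (\<lambda>y. y < x) ys)) xs)"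

lemma cross_simps[simp]:
  "cross [] ys = 0" "cross (x # xs) ys = length (filter (\<lambda>y. y < x) ys) + cross xs ys"
  by (simp_all add: cross_def)

lemma cross_append1: "cross (xs @ ys) zs = cross xs zs + cross ys zs"
  by (induction xs) auto

lemma cross_append2: "cross xs (ys @ zs) = cross xs ys + cross xs zs"
  by (induction xs) auto

lemma ninv_append: "ninv (xs @ ys) = ninv xs + ninv ys + cross xs ys"
  by (induction xs) auto

lemma ninv_replicate[simp]: "ninv (replicate q c) = 0"
  by (induction q) auto

lemma cross_replicate_left: "cross (replicate q c) ys = q * length (filter (\<lambda>y. y < c) ys)"
  by (induction q) auto

lemma cross_ge: "\<forall>x\<in>set xs. x \<le> c \<Longrightarrow> \<forall>y\<in>set ys. c \<le> y \<Longrightarrow> cross xs ys = 0"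
proof (induction xs)
  case (Cons x xs)
  have "filter (\<lambda>y. y < x) ys = []" using Cons.prems by (fastforce simp: filter_empty_conv)
  then show ?case using Cons by simp
qed simp

lemma ninv_swap:
  assumes "i < j"
  shows "ninv (u @ [j, i] @ v) = Suc (ninv (u @ [i, j] @ v))"
proof -
  have "cross u ([j, i] @ v) = cross u ([i, j] @ v)" by (induction u) auto
  then show ?thesis using assms by (simp add: ninv_append)
qed

lemma ninv_0_sorted: "ninv xs = 0 \<longleftrightarrow> sorted xs"
  by (induction xs) (auto simp: filter_empty_conv not_less)

lemma descent:
  assumes "0 < ninv xs"
  shows "\<exists>u i j v. xs = u @ [j, i] @ v \<and> i < j"
  using assms
proof (induction xs)
  case Nil then show ?case by simp
next
  case (Cons x xs)
  show ?case
  proof (cases "0 < ninv xs")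
    case True
    then obtain u i j v where "xs = u @ [j, i] @ v" "i < j" using Cons.IH by blast
    then show ?thesis by (intro exI[of _ "x # u"]) auto
  next
    case False
    then have s: "sorted xs" using ninv_0_sorted by simp
    have "filter (\<lambda>y. y < x) xs \<noteq> []" using Cons.prems False by auto
    then obtain y where y: "y \<in> set xs" "y < x" by (auto simp: filter_empty_conv)
    then obtain y0 rest where xs: "xs = y0 # rest" by (cases xs) auto
    have "y0 \<le> y" using s y xs by auto
    then have "x # xs = [] @ [x, y0] @ rest \<and> y0 < x" using xs y by simp
    then show ?thesis by blast
  qed
qed

lemma sort_eq_mset: "mset xs = mset ys \<Longrightarrow> sort xs = sort ys"
  by (metis properties_for_sort mset_sort sorted_sort)

section \<open>Canonical words with few switches\<close>

definition ins :: "nat \<Rightarrow> nat \<Rightarrow> nat \<Rightarrow> nat list \<Rightarrow> nat list" where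
  "ins c a d xs = (if a \<le> d div length xs then replicate a c @ xs
     else replicate (d div length xs) c @ take (length xs - d mod length xs) xs @ [c] @
          drop (length xs - d mod length xs) xs @ replicate (a - d div length xs - 1) c)"

lemma sw_replicate[simp]: "sw (replicate q c) = 0"
proof (induction q)
  case (Suc q) then show ?case by (cases q) auto
qed simp

lemma sw_single[simp]: "sw [c] = 0" by simp

lemma replicate_mset_add: "replicate_mset (p + q) c = replicate_mset p c + replicate_mset q c"
  by (induction p) auto

lemma ins_props:
  assumes lt: "\<forall>x\<in>set xs. x < c" and d: "d \<le> a * length xs"
  shows "mset (ins c a d xs) = mset xs + replicate_mset a c"
    and "ninv (ins c a d xs) = ninv xs + d"
    and "sw (ins c a d xs) \<le> sw xs + 4"
proof -
  define L where "L = length xs"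
  define q where "q = d div L"
  define s where "s = d mod L"
  have dqs: "d = q * L + s" unfolding q_def s_def by simp
  have fl: "filter (\<lambda>y. y < c) ys = ys" if "set ys \<subseteq> set xs" for ys
    using that lt by (auto simp: filter_id_conv)
  have sL: "s \<le> L"
  proof (cases "L = 0")
    case True then show ?thesis using d by (simp add: s_def L_def)
  next
    case False then show ?thesis by (simp add: s_def less_imp_le)
  qed
  show "mset (ins c a d xs) = mset xs + replicate_mset a c"
  proof (cases "a \<le> q")
    case True then show ?thesis by (simp add: ins_def q_def L_def)
  next
    case False
    have ar: "replicate_mset a c = replicate_mset q c + add_mset c (replicate_mset (a - Suc q) c)"
    proof -
      have "a = q + Suc (a - Suc q)" using False by simp
      then show ?thesis by (metis replicate_mset_add replicate_mset_Suc)
    qed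
    have tk: "mset (take (L - s) xs) + mset (drop (L - s) xs) = mset xs"
      by (metis append_take_drop_id mset_append)
    show ?thesis using False ar tk
      unfolding ins_def L_def[symmetric] q_def[symmetric] s_def[symmetric] by (simp add: add_ac)
  qed
  show "ninv (ins c a d xs) = ninv xs + d"
  proof (cases "a \<le> q")
    case True
    have "d = a * L"
    proof (cases "L = 0")
      case True then show ?thesis using d by (simp add: L_def)
    next
      case False
      have "a * L \<le> q * L" using True by simp
      also have "\<dots> \<le> d" by (simp add: dqs)
      finally show ?thesis using d by (simp add: L_def)
    qed
    moreover have "L = 0 \<Longrightarrow> xs = []" by (simp add: L_def)
    ultimately show ?thesis using True
      by (simp add: ins_def q_def[symmetric] L_def[symmetric] ninv_append cross_replicate_left fl)
  next
    case False
    define T where "T = take (L - s) xs"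
    define D where "D = drop (L - s) xs"
    have TD: "T @ D = xs" by (simp add: T_def D_def)
    have lD: "length D = s" using sL by (simp add: D_def L_def)
    have sT: "set T \<subseteq> set xs" "set D \<subseteq> set xs" by (auto simp: T_def D_def dest: in_set_takeD in_set_dropD)
    have w: "ins c a d xs = replicate q c @ T @ [c] @ D @ replicate (a - q - 1) c"
      using False by (simp add: ins_def q_def s_def L_def T_def D_def)
    have Tc: "\<forall>x\<in>set T. x \<le> c" using lt sT by (auto simp: less_imp_le)
    have z1: "cross T [c] = 0" by (rule cross_ge[OF Tc]) simp
    have z2: "cross T (replicate (a - q - 1) c) = 0" by (rule cross_ge[OF Tc]) simp
    have c1: "cross T ([c] @ D @ replicate (a - q - 1) c) = cross T D"
      by (simp only: cross_append2 z1 z2)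
    have Dc: "\<forall>x\<in>set D. x \<le> c" using lt sT by (auto simp: less_imp_le)
    have c2: "cross D (replicate (a - q - 1) c) = 0" by (rule cross_ge[OF Dc]) simp
    have c3: "length (filter (\<lambda>y. y < c) (T @ [c] @ D @ replicate (a - q - 1) c)) = L"
    proof -
      have "filter (\<lambda>y. y < c) (T @ [c] @ D @ replicate (a - q - 1) c) = T @ D"
        using fl[OF sT(1)] fl[OF sT(2)] by simp
      then show ?thesis using TD by (simp add: L_def)
    qed
    have c4: "length (filter (\<lambda>y. y < c) (D @ replicate (a - q - 1) c)) = s"
      using fl[OF sT(2)] lD by simp
    have "ninv (ins c a d xs) = q * L + ninv T + cross T D + s + ninv D"
      unfolding w using c1 c2 c3 c4
      by (simp add: ninv_append cross_replicate_left cross_append2 del: append.simps; metis add_mult_distrib2)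
    also have "ninv xs = ninv T + ninv D + cross T D" using TD ninv_append[of T D] by simp
    ultimately show ?thesis using dqs by simp
  qed
  show "sw (ins c a d xs) \<le> sw xs + 4"
  proof (cases "a \<le> q")
    case True
    then show ?thesis using sw_append[of "replicate a c" xs] by (simp add: ins_def q_def L_def)
  next
    case False
    define T where "T = take (L - s) xs"
    define D where "D = drop (L - s) xs"
    define R where "R = replicate (a - q - 1) c"
    have w: "ins c a d xs = replicate q c @ (T @ ([c] @ (D @ R)))"
      using False by (simp add: ins_def q_def s_def L_def T_def D_def R_def)
    have "sw (replicate q c @ (T @ ([c] @ (D @ R)))) \<le> sw (replicate q c) + sw (T @ ([c] @ (D @ R))) + 1"
      by (rule sw_append)
    also have "sw (T @ ([c] @ (D @ R))) \<le> sw T + sw ([c] @ (D @ R)) + 1" by (rule sw_append)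
    also have "sw ([c] @ (D @ R)) \<le> sw [c] + sw (D @ R) + 1" by (rule sw_append)
    also have "sw (D @ R) \<le> sw D + sw R + 1" by (rule sw_append)
    also have "sw T + sw D \<le> sw (T @ D)" by (rule sw_append_ge)
    then have "sw T + sw D \<le> sw xs" by (simp add: T_def D_def)
    ultimately show ?thesis unfolding w by (simp add: R_def)
  qed
qed

fun cn :: "nat \<Rightarrow> nat list \<Rightarrow> nat list" where
  "cn 0 \<beta> = filter (\<lambda>x. x = 0) \<beta>"
| "cn (Suc m) \<beta> = ins (Suc m) (length (filter (\<lambda>x. x = Suc m) \<beta>))
     (ninv (filter (\<lambda>x. x \<le> Suc m) \<beta>) - ninv (filter (\<lambda>x. x \<le> m) \<beta>)) (cn m (filter (\<lambda>x. x \<le> m) \<beta>))"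

lemma sw_const: "\<forall>x\<in>set xs. x = c \<Longrightarrow> sw xs = 0"
proof (induction xs rule: sw.induct)
  case (1 x y xs) then show ?case by simp
qed simp_all

lemma ninv_max:
  assumes "\<forall>x\<in>set zs. x \<le> c"
  shows "ninv (filter (\<lambda>x. x < c) zs) \<le> ninv zs \<and>
    ninv zs \<le> ninv (filter (\<lambda>x. x < c) zs) + length (filter (\<lambda>x. x = c) zs) * length (filter (\<lambda>x. x < c) zs)"
  using assms
proof (induction zs)
  case Nil then show ?case by simp
next
  case (Cons z zs)
  then have IH: "ninv (filter (\<lambda>x. x < c) zs) \<le> ninv zs"
    "ninv zs \<le> ninv (filter (\<lambda>x. x < c) zs) + length (filter (\<lambda>x. x = c) zs) * length (filter (\<lambda>x. x < c) zs)"
    by auto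
  show ?case
  proof (cases "z = c")
    case True
    then show ?thesis using IH by simp
  next
    case False
    then have zc: "z < c" using Cons.prems by auto
    have "filter (\<lambda>y. y < z) (filter (\<lambda>x. x < c) zs) = filter (\<lambda>y. y < z) zs"
      using zc by (auto simp: filter_filter intro: filter_cong)
    then show ?thesis using IH zc False by (simp add: add_mono)
  qed
qed

lemma mset_split_max:
  fixes zs :: "nat list"
  assumes "\<forall>x\<in>set zs. x \<le> c"
  shows "mset zs = mset (filter (\<lambda>x. x < c) zs) + replicate_mset (length (filter (\<lambda>x. x = c) zs)) c"
  using assms
proof (induction zs)
  case (Cons z zs)
  then show ?case by (cases "z = c") auto
qed simp

lemma cn_props:
  "mset (cn m \<beta>) = mset (filter (\<lambda>x. x \<le> m) \<beta>) \<and> ninv (cn m \<beta>) = ninv (filter (\<lambda>x. x \<le> m) \<beta>) \<and> sw (cn m \<beta>) \<le> 4 * m"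
proof (induction m arbitrary: \<beta>)
  case 0
  have "filter (\<lambda>x. x = 0) \<beta> = filter (\<lambda>x. x \<le> (0::nat)) \<beta>" by (rule filter_cong) auto
  moreover have "sw (filter (\<lambda>x. x = 0) \<beta>) = 0" by (rule sw_const) auto
  ultimately show ?case by simp
next
  case (Suc m)
  define rest where "rest = filter (\<lambda>x. x \<le> m) \<beta>"
  define b' where "b' = filter (\<lambda>x. x \<le> Suc m) \<beta>"
  define xs where "xs = cn m rest"
  define a where "a = length (filter (\<lambda>x. x = Suc m) \<beta>)"
  define d where "d = ninv b' - ninv rest"
  have frr: "filter (\<lambda>x. x \<le> m) rest = rest" by (simp add: rest_def)
  have IH: "mset xs = mset rest" "ninv xs = ninv rest" "sw xs \<le> 4 * m"
    using Suc.IH[of rest] frr by (auto simp: xs_def)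
  have b'le: "\<forall>x\<in>set b'. x \<le> Suc m" by (simp add: b'_def)
  have fb: "filter (\<lambda>x. x < Suc m) b' = rest"
    unfolding b'_def rest_def filter_filter by (rule filter_cong) auto
  have fa: "length (filter (\<lambda>x. x = Suc m) b') = a"
    unfolding b'_def a_def filter_filter by (rule arg_cong[where f=length], rule filter_cong) auto
  have lx: "length xs = length rest" using IH(1) by (metis size_mset)
  from ninv_max[OF b'le] fb fa have nm: "ninv rest \<le> ninv b'" "ninv b' \<le> ninv rest + a * length rest" by auto
  have lt: "\<forall>x\<in>set xs. x < Suc m"
  proof
    fix x assume "x \<in> set xs"
    then have "x \<in> set rest" using IH(1) by (metis set_mset_mset)
    then show "x < Suc m" by (simp add: rest_def)
  qed
  have dd: "d \<le> a * length xs" using nm lx by (simp add: d_def)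
  have cn_eq: "cn (Suc m) \<beta> = ins (Suc m) a d xs" by (simp add: a_def d_def xs_def rest_def b'_def)
  note ip = ins_props[OF lt dd]
  have "mset (cn (Suc m) \<beta>) = mset b'"
    using ip(1) IH(1) mset_split_max[OF b'le] fb fa cn_eq by simp
  moreover have "ninv (cn (Suc m) \<beta>) = ninv b'" using ip(2) IH(2) nm(1) cn_eq by (simp add: d_def)
  moreover have "sw (cn (Suc m) \<beta>) \<le> 4 * Suc m" using ip(3) IH(3) cn_eq by simp
  ultimately show ?case by (simp add: b'_def)
qed

lemma words_filter: "\<beta> \<in> words n \<Longrightarrow> filter (\<lambda>x. x \<le> n) \<beta> = \<beta>"
  unfolding words_def by (auto simp: filter_id_conv)

lemma cn_words:
  assumes "\<beta> \<in> words n"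
  shows "mset (cn n \<beta>) = mset \<beta>" "ninv (cn n \<beta>) = ninv \<beta>" "switches (cn n \<beta>) \<le> 4 * int n"
    "cn n \<beta> \<in> words n" "length (cn n \<beta>) = length \<beta>"
proof -
  note p = cn_props[of n \<beta>] words_filter[OF assms]
  show m: "mset (cn n \<beta>) = mset \<beta>" using p by simp
  show "ninv (cn n \<beta>) = ninv \<beta>" using p by simp
  show "switches (cn n \<beta>) \<le> 4 * int n" using p by (auto simp: switches_sw)
  have "set (cn n \<beta>) = set \<beta>" using m by (metis set_mset_mset)
  then show "cn n \<beta> \<in> words n" using assms unfolding words_def by simp
  show "length (cn n \<beta>) = length \<beta>" using m by (metis size_mset)
qed

definition rclosed :: "nat \<Rightarrow> coeffs set \<Rightarrow> bool" where
  "rclosed n I \<longleftrightarrow> 0 \<in> I \<and> (\<forall>i j. 1 \<le> i \<and> i < j \<and> j \<le> n \<longrightarrow> monom 1 0 [i, j] - monom 1 1 [j, i] \<in> I) \<and>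
     (\<forall>x\<in>I. \<forall>y\<in>I. x + y \<in> I) \<and>
     (\<forall>s k u x. u \<in> words n \<longrightarrow> x \<in> I \<longrightarrow> lmul s k u x \<in> I \<and> rmul s k u x \<in> I)"

lemma rclosedD:
  assumes "rclosed n I"
  shows "0 \<in> I" "\<And>i j. 1 \<le> i \<Longrightarrow> i < j \<Longrightarrow> j \<le> n \<Longrightarrow> monom 1 0 [i, j] - monom 1 1 [j, i] \<in> I"
    "\<And>x y. x \<in> I \<Longrightarrow> y \<in> I \<Longrightarrow> x + y \<in> I"
    "\<And>s k u x. u \<in> words n \<Longrightarrow> x \<in> I \<Longrightarrow> lmul s k u x \<in> I"
    "\<And>s k u x. u \<in> words n \<Longrightarrow> x \<in> I \<Longrightarrow> rmul s k u x \<in> I"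
  using assms unfolding rclosed_def by blast+

lemma rclosed_neg:
  assumes "rclosed n I" "x \<in> I" shows "- x \<in> I"
proof -
  have "lmul (-1) 0 [] x \<in> I" using rclosedD(4)[OF assms(1) _ assms(2)] by (simp add: words_def)
  moreover have "lmul (-1) 0 [] x = - x" by (simp add: lmul_scalar fun_eq_iff)
  ultimately show ?thesis by simp
qed

lemma rclosed_diff:
  assumes "rclosed n I" "x \<in> I" "y \<in> I" shows "x - y \<in> I"
  using rclosedD(3)[OF assms(1) assms(2) rclosed_neg[OF assms(1,3)]] by (simp only: diff_conv_add_uminus)

lemma F1:
  assumes I: "rclosed n I"
  shows "\<beta> \<in> words n \<Longrightarrow> monom s k \<beta> - monom s (k - int (ninv \<beta>)) (sort \<beta>) \<in> I"
proof (induction "ninv \<beta>" arbitrary: \<beta> k)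
  case 0
  then have srt: "sort \<beta> = \<beta>" using ninv_0_sorted sorted_sort_id by metis
  have e: "k - int (ninv \<beta>) = k" using 0 by simp
  have "monom s k \<beta> - monom s (k - int (ninv \<beta>)) (sort \<beta>) = 0" by (simp only: e srt diff_self)
  then show ?case using rclosedD(1)[OF I] by metis
next
  case (Suc m)
  then obtain u i j v where b: "\<beta> = u @ [j, i] @ v" "i < j" using descent[of \<beta>] by auto
  define \<beta>' where "\<beta>' = u @ [i, j] @ v"
  have nb: "ninv \<beta>' = m" using ninv_swap[OF b(2), of u v] Suc(2) b by (simp add: \<beta>'_def)
  have wds: "u \<in> words n" "v \<in> words n" "1 \<le> i" "j \<le> n" "\<beta>' \<in> words n"
    using Suc(3) b unfolding words_def \<beta>'_def by auto
  have srt: "sort \<beta>' = sort \<beta>" by (rule sort_eq_mset) (simp add: \<beta>'_def b)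
  have IH: "monom s (k - 1) \<beta>' - monom s (k - 1 - int m) (sort \<beta>') \<in> I"
    using Suc(1)[of \<beta>' "k - 1"] nb wds(5) by simp
  have D: "lmul s (k - 1) u (rmul 1 0 v (monom 1 0 [i, j] - monom 1 1 [j, i])) \<in> I"
    using rclosedD(4)[OF I wds(1) rclosedD(5)[OF I wds(2) rclosedD(2)[OF I wds(3) b(2) wds(4)]]] .
  have Deq: "lmul s (k - 1) u (rmul 1 0 v (monom 1 0 [i, j] - monom 1 1 [j, i])) = monom s (k - 1) \<beta>' - monom s k \<beta>"
    by (simp add: rmul_diff lmul_diff rmul_mono lmul_mono \<beta>'_def b)
  have "- (monom s (k - 1) \<beta>' - monom s k \<beta>) + (monom s (k - 1) \<beta>' - monom s (k - 1 - int m) (sort \<beta>')) \<in> I"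
    using rclosedD(3)[OF I rclosed_neg[OF I D[unfolded Deq]] IH] .
  moreover have "- (monom s (k - 1) \<beta>' - monom s k \<beta>) + (monom s (k - 1) \<beta>' - monom s (k - 1 - int m) (sort \<beta>')) =
      monom s k \<beta> - monom s (k - int (ninv \<beta>)) (sort \<beta>)"
    using srt by (simp add: algebra_simps Suc(2)[symmetric])
  ultimately show ?case by simp
qed

lemma F1_pair:
  assumes I: "rclosed n I" and b: "\<beta> \<in> words n" and m: "mset \<beta>' = mset \<beta>"
    and k: "k - int (ninv \<beta>) = k' - int (ninv \<beta>')"
  shows "monom s k \<beta> - monom s k' \<beta>' \<in> I"
proof -
  have "set \<beta>' = set \<beta>" using m by (metis set_mset_mset)
  then have b': "\<beta>' \<in> words n" using b by (simp add: words_def)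
  have srt: "sort \<beta>' = sort \<beta>" by (rule sort_eq_mset[OF m])
  have "(monom s k \<beta> - monom s (k - int (ninv \<beta>)) (sort \<beta>)) - (monom s k' \<beta>' - monom s (k' - int (ninv \<beta>')) (sort \<beta>')) \<in> I"
    by (rule rclosed_diff[OF I F1[OF I b] F1[OF I b']])
  then show ?thesis using k srt by simp
qed

lemma zeta_mono: "zeta i = monom 1 0 [i]"
  unfolding zeta_def monom_def by auto

lemma zvar_mono: "zvar = monom 1 1 []"
  unfolding zvar_def monom_def by auto

lemma relations_eq: "relations n = {monom 1 0 [i, j] - monom 1 1 [j, i] | i j. 1 \<le> i \<and> i < j \<and> j \<le> n}"
  unfolding relations_def zeta_mono zvar_mono cmul_mono_left lmul_mono by simp

section \<open>The reordering map\<close>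

definition fib :: "nat \<Rightarrow> nat list \<Rightarrow> nat list set" where
  "fib n \<gamma> = {\<beta>. \<beta> \<in> words n \<and> cn n \<beta> = \<gamma>}"

lemma finite_fib: "finite (fib n \<gamma>)"
proof (rule finite_subset)
  show "fib n \<gamma> \<subseteq> {\<beta>. set \<beta> \<subseteq> {1..n} \<and> length \<beta> = length \<gamma>}"
    unfolding fib_def using cn_words(5) by (auto simp: words_def)
  show "finite {\<beta>. set \<beta> \<subseteq> {1..n} \<and> length \<beta> = length \<gamma>}" by (rule finite_lists_length_eq) simp
qed

definition Phi :: "nat \<Rightarrow> coeffs \<Rightarrow> coeffs" where
  "Phi n x = (\<lambda>K \<gamma>. \<Sum>\<beta>\<in>fib n \<gamma>. x K \<beta>)"

lemma Phi_diff: "Phi n (x - y) = Phi n x - Phi n y"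
  unfolding Phi_def by (simp add: fun_eq_iff sum_subtractf)

lemma Phi_add: "Phi n (x + y) = Phi n x + Phi n y"
  unfolding Phi_def by (simp add: fun_eq_iff sum.distrib)

lemma Phi_zero[simp]: "Phi n 0 = 0"
  unfolding Phi_def by (simp add: fun_eq_iff)

lemma Phi_mono:
  assumes b: "\<beta> \<in> words n"
  shows "Phi n (monom s k \<beta>) = monom s k (cn n \<beta>)"
proof (intro ext)
  fix K \<gamma>
  have "Phi n (monom s k \<beta>) K \<gamma> = (\<Sum>\<beta>'\<in>fib n \<gamma>. if \<beta> = \<beta>' then (if K = k then s else 0) else 0)"
    unfolding Phi_def by (rule sum.cong) (auto simp: monom_def)
  also have "\<dots> = (if \<beta> \<in> fib n \<gamma> then (if K = k then s else 0) else 0)"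
    by (rule sum.delta'[OF finite_fib])
  also have "\<dots> = monom s k (cn n \<beta>) K \<gamma>" using b by (auto simp: fib_def monom_def)
  finally show "Phi n (monom s k \<beta>) K \<gamma> = monom s k (cn n \<beta>) K \<gamma>" .
qed

lemma wnorm_monom: "wnorm w (monom s k u) = norm s * w k u"
proof -
  have "wnorm w (monom s k u) = (case (k, u) of (k', \<alpha>) \<Rightarrow> norm (monom s k u k' \<alpha>) * w k' \<alpha>)"
    unfolding wnorm_def by (rule infsum_single_int) (auto simp: monom_def split: if_splits)
  then show ?thesis by (simp add: monom_def)
qed

lemma mono_alg:
  assumes "u \<in> words n \<or> s = 0"
  shows "monom s k u \<in> alg n W"
proof (rule algI)
  show "\<And>k' \<alpha>. \<alpha> \<notin> words n \<Longrightarrow> monom s k u k' \<alpha> = 0" using assms by (auto simp: monom_def)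
  fix w
  show "(\<lambda>(k', \<alpha>). norm (monom s k u k' \<alpha>) * w k' \<alpha>) summable_on UNIV"
    by (rule finite_nonzero_values_imp_summable_on, rule finite_subset[of _ "{(k, u)}"]) (auto simp: monom_def split: if_splits)
qed

lemma Phi_as_sum:
  assumes x: "x \<in> alg n W"
  shows "(\<Sum>\<^sub>\<infinity>p. monom (x (fst p) (snd p)) (fst p) (cn n (snd p)) K \<gamma>) = Phi n x K \<gamma>"
proof -
  let ?f = "\<lambda>p. monom (x (fst p) (snd p)) (fst p) (cn n (snd p)) K \<gamma>"
  have "infsum ?f UNIV = infsum ?f (Pair K ` fib n \<gamma>)"
  proof (rule infsum_cong_neutral)
    fix p assume p: "p \<in> UNIV - Pair K ` fib n \<gamma>"
    obtain k \<beta> where pp: "p = (k, \<beta>)" by (cases p)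
    show "?f p = 0"
    proof (cases "k = K \<and> cn n \<beta> = \<gamma>")
      case True
      then have "\<beta> \<notin> words n" using p pp by (auto simp: fib_def)
      then show ?thesis using algD[OF x] pp by (simp add: monom_def)
    qed (auto simp: monom_def pp)
  qed auto
  also have "\<dots> = sum ?f (Pair K ` fib n \<gamma>)" using finite_fib by simp
  also have "\<dots> = (\<Sum>\<beta>\<in>fib n \<gamma>. ?f (K, \<beta>))" by (subst sum.reindex) (auto simp: inj_on_def)
  also have "\<dots> = Phi n x K \<gamma>" unfolding Phi_def by (rule sum.cong) (auto simp: monom_def fib_def)
  finally show ?thesis .
qed

definition cndom :: "nat \<Rightarrow> (int \<Rightarrow> nat list \<Rightarrow> real) \<Rightarrow> (int \<Rightarrow> nat list \<Rightarrow> real) \<Rightarrow> real \<Rightarrow> bool" where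
  "cndom n w2 w1 C \<longleftrightarrow> 0 \<le> C \<and> (\<forall>k \<beta>. \<beta> \<in> words n \<longrightarrow> w2 k (cn n \<beta>) \<le> C * w1 k \<beta>)"

lemma Phi_abs:
  assumes gw1: "goodW W1" and gw2: "goodW W2" and x: "x \<in> alg n W1"
    and dom: "\<And>w2. w2 \<in> W2 \<Longrightarrow> \<exists>w1\<in>W1. \<exists>C. cndom n w2 w1 C"
  shows "Phi n x \<in> alg n W2"
    and "\<And>w1 w2 C. w1 \<in> W1 \<Longrightarrow> w2 \<in> W2 \<Longrightarrow> cndom n w2 w1 C \<Longrightarrow> wnorm w2 (Phi n x) \<le> C * wnorm w1 x"
proof -
  define t where "t p = monom (x (fst p) (snd p)) (fst p) (cn n (snd p))" for p :: "int \<times> nat list"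
  have tA: "t p \<in> alg n W2" for p
    unfolding t_def by (rule mono_alg) (use algD[OF x] cn_words(4) in blast)
  have bd: "wnorm w2 (t p) \<le> C * (case p of (k, \<alpha>) \<Rightarrow> norm (x k \<alpha>) * w1 k \<alpha>)"
    if "cndom n w2 w1 C" "w1 \<in> W1" for w1 w2 C p
  proof -
    obtain k \<beta> where pp: "p = (k, \<beta>)" by (cases p)
    show ?thesis
    proof (cases "\<beta> \<in> words n")
      case True
      then have "w2 k (cn n \<beta>) \<le> C * w1 k \<beta>" using that unfolding cndom_def by blast
      then have "norm (x k \<beta>) * w2 k (cn n \<beta>) \<le> norm (x k \<beta>) * (C * w1 k \<beta>)" by (rule mult_left_mono) simp
      then show ?thesis by (simp add: t_def pp wnorm_monom algebra_simps)
    next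
      case False
      then show ?thesis using algD[OF x False] that wnn[OF gw1 that(2)] by (simp add: t_def pp wnorm_zero cndom_def)
    qed
  qed
  have sm: "(\<lambda>p. wnorm w2 (t p)) summable_on UNIV" if w2: "w2 \<in> W2" for w2
  proof -
    obtain w1 C where wc: "w1 \<in> W1" "cndom n w2 w1 C" using dom[OF w2] by blast
    show ?thesis
      by (rule summable_on_comparison_test[OF summable_on_cmult_right[OF alg_summ[OF x wc(1)], of C]])
         (use bd[OF wc(2,1)] wnorm_nonneg[OF gw2 w2] in auto)
  qed
  have S: "(\<lambda>K \<gamma>. \<Sum>\<^sub>\<infinity>p. t p K \<gamma>) = Phi n x"
    using Phi_as_sum[OF x] by (simp add: t_def fun_eq_iff)
  show "Phi n x \<in> alg n W2" using abs_sum_mem[OF gw2 tA sm] S by simp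
  fix w1 w2 C assume w: "w1 \<in> W1" "w2 \<in> W2" "cndom n w2 w1 C"
  have "wnorm w2 (Phi n x) \<le> (\<Sum>\<^sub>\<infinity>p. wnorm w2 (t p))" using abs_sum_norm[OF gw2 tA sm w(2)] S by simp
  also have "\<dots> \<le> (\<Sum>\<^sub>\<infinity>p. C * (case p of (k, \<alpha>) \<Rightarrow> norm (x k \<alpha>) * w1 k \<alpha>))"
    by (rule infsum_mono[OF sm[OF w(2)] summable_on_cmult_right[OF alg_summ[OF x w(1)]]]) (rule bd[OF w(3,1)])
  also have "\<dots> = C * wnorm w1 x" unfolding wnorm_def by (rule infsum_cmult_right') 
  finally show "wnorm w2 (Phi n x) \<le> C * wnorm w1 x" .
qed

lemma infsum_diff_c:
  fixes f g :: "'a \<Rightarrow> complex"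
  assumes "f summable_on A" "g summable_on A"
  shows "infsum (\<lambda>p. f p - g p) A = infsum f A - infsum g A"
proof -
  have "infsum (\<lambda>p. f p + - g p) A = infsum f A + infsum (\<lambda>p. - g p) A"
    by (rule infsum_add[OF assms(1)]) (simp add: summable_on_uminus assms(2))
  then show ?thesis by (simp add: infsum_uminus)
qed

lemma Phi_diff_mem:
  assumes gw: "goodW W" and x: "x \<in> alg n W"
    and dom: "\<And>w. w \<in> W \<Longrightarrow> \<exists>w1\<in>W. \<exists>C. cndom n w w1 C"
    and cl: "closedin (seminorm_topology (alg n W) (wnorm ` W)) I"
    and I0: "0 \<in> I" and Iadd: "\<And>x y. x \<in> I \<Longrightarrow> y \<in> I \<Longrightarrow> x + y \<in> I"
    and IA: "I \<subseteq> alg n W"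
    and gen: "\<And>s k \<beta>. \<beta> \<in> words n \<Longrightarrow> monom s k \<beta> - monom s k (cn n \<beta>) \<in> I"
  shows "x - Phi n x \<in> I"
proof -
  define t where "t p = monom (x (fst p) (snd p)) (fst p) (snd p) - monom (x (fst p) (snd p)) (fst p) (cn n (snd p))" for p :: "int \<times> nat list"
  have tI: "t p \<in> I" for p
  proof (cases "snd p \<in> words n")
    case True then show ?thesis using gen by (simp add: t_def)
  next
    case False then show ?thesis using algD[OF x False] I0 by (simp add: t_def)
  qed
  have tA: "t p \<in> alg n W" for p using tI IA by blast
  have sm: "(\<lambda>p. wnorm w (t p)) summable_on UNIV" if w: "w \<in> W" for w
  proof -
    obtain w1 C where wc: "w1 \<in> W" "cndom n w w1 C" using dom[OF w] by blast
    have s1: "(\<lambda>p. (case p of (k, \<alpha>) \<Rightarrow> norm (x k \<alpha>) * w k \<alpha>) + C * (case p of (k, \<alpha>) \<Rightarrow> norm (x k \<alpha>) * w1 k \<alpha>)) summable_on UNIV"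
      by (rule summable_on_add[OF alg_summ[OF x w] summable_on_cmult_right[OF alg_summ[OF x wc(1)]]])
    show ?thesis
    proof (rule summable_on_comparison_test[OF s1])
      fix p :: "int \<times> nat list"
      obtain k \<beta> where pp: "p = (k, \<beta>)" by (cases p)
      show "0 \<le> wnorm w (t p)" by (rule wnorm_nonneg[OF gw w])
      have m1: "monom (x k \<beta>) k \<beta> \<in> alg n W" "- monom (x k \<beta>) k (cn n \<beta>) \<in> alg n W"
        using algD[OF x] cn_words(4) by (auto intro!: mono_alg alg_uminus[OF gw])
      have "wnorm w (t p) \<le> wnorm w (monom (x k \<beta>) k \<beta>) + wnorm w (- monom (x k \<beta>) k (cn n \<beta>))"
        using wnorm_add[OF gw m1 w] by (simp add: t_def pp)
      also have "\<dots> = norm (x k \<beta>) * w k \<beta> + norm (x k \<beta>) * w k (cn n \<beta>)" by (simp add: wnorm_uminus wnorm_monom)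
      also have "norm (x k \<beta>) * w k (cn n \<beta>) \<le> C * (norm (x k \<beta>) * w1 k \<beta>)"
      proof (cases "\<beta> \<in> words n")
        case True
        then have "w k (cn n \<beta>) \<le> C * w1 k \<beta>" using wc unfolding cndom_def by blast
        then have "norm (x k \<beta>) * w k (cn n \<beta>) \<le> norm (x k \<beta>) * (C * w1 k \<beta>)" by (rule mult_left_mono) simp
        then show ?thesis by (simp add: algebra_simps)
      next
        case False then show ?thesis using algD[OF x False] by simp
      qed
      finally show "wnorm w (t p) \<le> (case p of (k, \<alpha>) \<Rightarrow> norm (x k \<alpha>) * w k \<alpha>) + C * (case p of (k, \<alpha>) \<Rightarrow> norm (x k \<alpha>) * w1 k \<alpha>)"
        by (simp add: pp)
    qed
  qed
  have S: "(\<lambda>K \<gamma>. \<Sum>\<^sub>\<infinity>p. t p K \<gamma>) = x - Phi n x"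
  proof (intro ext)
    fix K \<gamma>
    let ?f = "\<lambda>p. monom (x (fst p) (snd p)) (fst p) (snd p) K \<gamma>"
    let ?g = "\<lambda>p. monom (x (fst p) (snd p)) (fst p) (cn n (snd p)) K \<gamma>"
    have fs: "?f summable_on UNIV"
      by (rule finite_nonzero_values_imp_summable_on, rule finite_subset[of _ "{(K, \<gamma>)}"]) (auto simp: monom_def split: if_splits)
    have "infsum ?f UNIV = ?f (K, \<gamma>)"
      by (rule infsum_single_int) (auto simp: monom_def)
    then have f1: "infsum ?f UNIV = x K \<gamma>" by (simp add: monom_def)
    have gs: "?g summable_on UNIV"
    proof (rule finite_nonzero_values_imp_summable_on, rule finite_subset)
      show "{p \<in> UNIV. ?g p \<noteq> 0} \<subseteq> Pair K ` fib n \<gamma>"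
        using algD[OF x] by (auto simp: monom_def fib_def image_iff split: if_splits) blast
      show "finite (Pair K ` fib n \<gamma>)" using finite_fib by simp
    qed
    have "(\<Sum>\<^sub>\<infinity>p. t p K \<gamma>) = infsum (\<lambda>p. ?f p - ?g p) UNIV" by (simp add: t_def)
    also have "\<dots> = x K \<gamma> - Phi n x K \<gamma>" using infsum_diff_c[OF fs gs] f1 Phi_as_sum[OF x] by simp
    finally show "(\<Sum>\<^sub>\<infinity>p. t p K \<gamma>) = (x - Phi n x) K \<gamma>" by simp
  qed
  show ?thesis using abs_sum_closed[OF gw tA sm cl I0 Iadd tI] S by simp
qed

lemma two_sided_alg:
  assumes gw: "goodW W"
  shows "two_sided_ideal (alg n W) (alg n W)"
  unfolding two_sided_ideal_def using alg_zero alg_add[OF gw] alg_cmul[OF gw] by blast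

lemma tsi_Inter:
  assumes "F \<noteq> {}" "\<And>I. I \<in> F \<Longrightarrow> two_sided_ideal A I"
  shows "two_sided_ideal A (\<Inter>F)"
  using assms unfolding two_sided_ideal_def by blast

lemma cig_props:
  assumes gw: "goodW W" and S: "S \<subseteq> alg n W"
  defines "X \<equiv> seminorm_topology (alg n W) (wnorm ` W)"
  shows "closed_ideal_gen (alg n W) X S \<subseteq> alg n W"
    and "closedin X (closed_ideal_gen (alg n W) X S)"
    and "two_sided_ideal (alg n W) (closed_ideal_gen (alg n W) X S)"
    and "S \<subseteq> closed_ideal_gen (alg n W) X S"
    and "\<And>J. S \<subseteq> J \<Longrightarrow> two_sided_ideal (alg n W) J \<Longrightarrow> closedin X J \<Longrightarrow> closed_ideal_gen (alg n W) X S \<subseteq> J"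
proof -
  let ?F = "{I. S \<subseteq> I \<and> two_sided_ideal (alg n W) I \<and> closedin X I}"
  have Ain: "alg n W \<in> ?F" using S two_sided_alg[OF gw] alg_closed[OF gw] unfolding X_def by blast
  show "closed_ideal_gen (alg n W) X S \<subseteq> alg n W" unfolding closed_ideal_gen_def using Ain by blast
  show "closedin X (closed_ideal_gen (alg n W) X S)" unfolding closed_ideal_gen_def
    by (rule closedin_Inter) (use Ain in auto)
  show "S \<subseteq> closed_ideal_gen (alg n W) X S" unfolding closed_ideal_gen_def by blast
  show "\<And>J. S \<subseteq> J \<Longrightarrow> two_sided_ideal (alg n W) J \<Longrightarrow> closedin X J \<Longrightarrow> closed_ideal_gen (alg n W) X S \<subseteq> J"
    unfolding closed_ideal_gen_def by blast
  show "two_sided_ideal (alg n W) (closed_ideal_gen (alg n W) X S)"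
    unfolding closed_ideal_gen_def by (rule tsi_Inter) (use Ain in auto)
qed

lemma ideal_rclosed:
  assumes gw: "goodW W" and id: "two_sided_ideal (alg n W) I" and rel: "relations n \<subseteq> I"
  shows "rclosed n I"
  unfolding rclosed_def
proof (intro conjI allI impI ballI)
  show "0 \<in> I" using id unfolding two_sided_ideal_def by blast
  fix i j assume "1 \<le> i \<and> i < j \<and> j \<le> n"
  then show "monom 1 0 [i, j] - monom 1 1 [j, i] \<in> I" using rel unfolding relations_eq by blast
next
  fix x y assume "x \<in> I" "y \<in> I"
  then show "x + y \<in> I" using id unfolding two_sided_ideal_def by blast
next
  fix s k u x assume u: "u \<in> words n" and x: "x \<in> I"
  have m: "monom s k u \<in> alg n W" by (rule mono_alg) (use u in blast)
  show "lmul s k u x \<in> I" using id m x unfolding two_sided_ideal_def cmul_mono_left[symmetric] by blast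
  show "rmul s k u x \<in> I" using id m x unfolding two_sided_ideal_def cmul_mono_right[symmetric] by blast
qed

lemma relations_alg:
  assumes gw: "goodW W"
  shows "relations n \<subseteq> alg n W"
proof
  fix x assume "x \<in> relations n"
  then obtain i j where x: "x = monom 1 0 [i, j] - monom 1 1 [j, i]" "1 \<le> i" "i < j" "j \<le> n"
    unfolding relations_eq by blast
  have w: "[i, j] \<in> words n" "[j, i] \<in> words n" using x by (auto simp: words_def)
  show "x \<in> alg n W"
  proof -
    have "monom 1 0 [i, j] - monom 1 1 [j, i] = monom 1 0 [i, j] + monom (-1) 1 [j, i]"
      by (simp add: monom_def fun_eq_iff)
    moreover have "monom 1 0 [i, j] \<in> alg n W" "monom (-1) 1 [j, i] \<in> alg n W"
      using w by (auto intro: mono_alg)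
    ultimately have "monom 1 0 [i, j] + monom (-1) 1 [j, i] \<in> alg n W"
      using alg_add[OF gw] by blast
    moreover have "x = monom 1 0 [i, j] + monom (-1) 1 [j, i]"
      by (simp only: x(1) \<open>monom 1 0 [i, j] - monom 1 1 [j, i] = monom 1 0 [i, j] + monom (-1) 1 [j, i]\<close>)
    ultimately show ?thesis by simp
  qed
qed

section \<open>Quotient topology\<close>

lemma coset_facts:
  assumes I0: "0 \<in> I" and Ineg: "\<And>x. x \<in> I \<Longrightarrow> - x \<in> I" and Iadd: "\<And>x y. x \<in> I \<Longrightarrow> y \<in> I \<Longrightarrow> x + y \<in> I"
  shows "\<And>x. x \<in> A \<Longrightarrow> x \<in> coset A I x"
    and "\<And>x y. y \<in> coset A I x \<Longrightarrow> coset A I y = coset A I x"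
proof -
  show "\<And>x. x \<in> A \<Longrightarrow> x \<in> coset A I x" using I0 by (simp add: coset_def)
  fix x y assume y: "y \<in> coset A I x"
  then have yx: "y - x \<in> I" by (simp add: coset_def)
  show "coset A I y = coset A I x"
  proof (intro set_eqI iffI)
    fix z assume "z \<in> coset A I y"
    then have "z \<in> A" "z - y \<in> I" by (auto simp: coset_def)
    moreover have "z - x = (z - y) + (y - x)" by simp
    moreover have "(z - y) + (y - x) \<in> I" using Iadd \<open>z - y \<in> I\<close> yx by blast
    ultimately show "z \<in> coset A I x" by (simp add: coset_def)
  next
    fix z assume "z \<in> coset A I x"
    then have "z \<in> A" "z - x \<in> I" by (auto simp: coset_def)
    moreover have "z - y = (z - x) + - (y - x)" by simp
    ultimately show "z \<in> coset A I y" using Iadd Ineg yx by (metis (mono_tags, lifting) coset_def mem_Collect_eq)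
  qed
qed

lemma quot_open:
  assumes top: "topspace X = A"
    and I0: "0 \<in> I" and Ineg: "\<And>x. x \<in> I \<Longrightarrow> - x \<in> I" and Iadd: "\<And>x y. x \<in> I \<Longrightarrow> y \<in> I \<Longrightarrow> x + y \<in> I"
  shows "openin (quotient_top A X I) W \<longleftrightarrow> W \<subseteq> quotient_set A I \<and> openin X (\<Union>W)"
    and "topspace (quotient_top A X I) = quotient_set A I"
proof -
  let ?Q = "quotient_set A I"
  let ?T = "{U. U \<subseteq> ?Q \<and> openin X (\<Union>U)}"
  note cf = coset_facts[OF I0 Ineg Iadd]
  have UQ: "\<Union>?Q = A"
  proof
    show "\<Union>?Q \<subseteq> A" by (auto simp: quotient_set_def coset_def)
    show "A \<subseteq> \<Union>?Q" using cf(1) by (auto simp: quotient_set_def)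
  qed
  have QT: "?Q \<in> ?T" using UQ top by (simp add: openin_topspace[of X, unfolded top])
  have UInt: "\<Union>(U1 \<inter> U2) = \<Union>U1 \<inter> \<Union>U2" if U12: "U1 \<subseteq> ?Q" "U2 \<subseteq> ?Q" for U1 U2
  proof
    show "\<Union>(U1 \<inter> U2) \<subseteq> \<Union>U1 \<inter> \<Union>U2" by blast
    show "\<Union>U1 \<inter> \<Union>U2 \<subseteq> \<Union>(U1 \<inter> U2)"
    proof
      fix y assume "y \<in> \<Union>U1 \<inter> \<Union>U2"
      then obtain C1 C2 where C: "C1 \<in> U1" "C2 \<in> U2" "y \<in> C1" "y \<in> C2" by blast
      then obtain x1 x2 where x: "C1 = coset A I x1" "C2 = coset A I x2"
        using U12 unfolding quotient_set_def by blast
      have "C1 = C2" using cf(2)[where x=x1 and y=y and A=A] cf(2)[where x=x2 and y=y and A=A] C x by metis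
      then show "y \<in> \<Union>(U1 \<inter> U2)" using C by blast
    qed
  qed
  have gen: "generate_topology_on ?T V \<Longrightarrow> V \<inter> ?Q \<in> ?T" for V
  proof (induction rule: generate_topology_on.induct)
    case Empty then show ?case by simp
  next
    case (Int a b)
    have "(a \<inter> b) \<inter> ?Q = (a \<inter> ?Q) \<inter> (b \<inter> ?Q)" by blast
    moreover have "openin X (\<Union>((a \<inter> ?Q) \<inter> (b \<inter> ?Q)))"
      using Int.IH UInt[of "a \<inter> ?Q" "b \<inter> ?Q"] by (auto intro: openin_Int)
    ultimately show ?case by auto
  next
    case (UN K)
    have "\<Union>(\<Union>K \<inter> ?Q) = \<Union>((\<lambda>k. \<Union>(k \<inter> ?Q)) ` K)" by blast
    moreover have "openin X (\<Union>((\<lambda>k. \<Union>(k \<inter> ?Q)) ` K))" using UN.IH by (intro openin_Union) auto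
    ultimately show ?case by auto
  next
    case (Basis s)
    then show ?case by (simp add: Int_absorb2)
  qed
  show "openin (quotient_top A X I) W \<longleftrightarrow> W \<subseteq> ?Q \<and> openin X (\<Union>W)"
  proof
    assume "openin (quotient_top A X I) W"
    then obtain V where V: "generate_topology_on ?T V" "W = V \<inter> ?Q"
      unfolding quotient_top_def openin_subtopology openin_topology_generated_by_iff by blast
    show "W \<subseteq> ?Q \<and> openin X (\<Union>W)" using gen[OF V(1)] V(2) by simp
  next
    assume W: "W \<subseteq> ?Q \<and> openin X (\<Union>W)"
    then have "generate_topology_on ?T W" by (intro generate_topology_on.Basis) simp
    moreover have "W = W \<inter> ?Q" using W by blast
    ultimately show "openin (quotient_top A X I) W"
      unfolding quotient_top_def openin_subtopology openin_topology_generated_by_iff by blast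
  qed
  show "topspace (quotient_top A X I) = ?Q"
  proof -
    have "topspace (topology_generated_by ?T) = \<Union>?T" by (rule topology_generated_by_topspace)
    moreover have "?Q \<subseteq> \<Union>?T" using QT by blast
    moreover have "\<Union>?T \<subseteq> ?Q" by blast
    ultimately show ?thesis unfolding quotient_top_def by auto
  qed
qed

lemma semi_T: "0 < r \<Longrightarrow> semi_ok (alg n (WT r)) (wnorm ` WT r)"
  by (rule semi_ok_alg[OF goodW_WT])
lemma semi_F: "0 < r \<Longrightarrow> semi_ok (alg n (WF r)) (wnorm ` WF r)"
  by (rule semi_ok_alg[OF goodW_WF])

lemma wT_in: "w \<in> WT r \<Longrightarrow> \<exists>\<rho> R. w = wT \<rho> R \<and> 0 < \<rho> \<and> ereal \<rho> < r \<and> 1 \<le> R"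
  unfolding WT_def by blast
lemma wF_in: "w \<in> WF r \<Longrightarrow> \<exists>\<rho> \<tau> R. w = wF \<rho> \<tau> R \<and> 0 < \<rho> \<and> ereal \<rho> < r \<and> 1 \<le> \<tau> \<and> 1 \<le> R"
  unfolding WF_def by blast
lemma wT_mem: "0 < \<rho> \<Longrightarrow> ereal \<rho> < r \<Longrightarrow> 1 \<le> R \<Longrightarrow> wT \<rho> R \<in> WT r"
  unfolding WT_def by blast
lemma wF_mem: "0 < \<rho> \<Longrightarrow> ereal \<rho> < r \<Longrightarrow> 1 \<le> \<tau> \<Longrightarrow> 1 \<le> R \<Longrightarrow> wF \<rho> \<tau> R \<in> WF r"
  unfolding WF_def by blast

lemma AF_sub_AT:
  assumes r: "0 < r"
  shows "alg n (WF r) \<subseteq> alg n (WT r)"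
proof
  fix x assume x: "x \<in> alg n (WF r)"
  show "x \<in> alg n (WT r)"
  proof (rule algI)
    show "\<And>k \<alpha>. \<alpha> \<notin> words n \<Longrightarrow> x k \<alpha> = 0" using algD[OF x] .
    fix w assume "w \<in> WT r"
    then obtain \<rho> R where w: "w = wT \<rho> R" "0 < \<rho>" "ereal \<rho> < r" "1 \<le> R" using wT_in by blast
    have "wF \<rho> 1 R \<in> WF r" using w by (intro wF_mem) auto
    from alg_summ[OF x this] show "(\<lambda>(k, \<alpha>). norm (x k \<alpha>) * w k \<alpha>) summable_on UNIV"
    proof (rule summable_on_comparison_test)
      fix p :: "int \<times> nat list"
      obtain k \<alpha> where p: "p = (k, \<alpha>)" by (cases p)
      have "wT \<rho> R k \<alpha> \<le> wF \<rho> 1 R k \<alpha>" using w by (intro wT_le_wF) auto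
      then show "(case p of (k, \<alpha>) \<Rightarrow> norm (x k \<alpha>) * w k \<alpha>) \<le> (case p of (k, \<alpha>) \<Rightarrow> norm (x k \<alpha>) * wF \<rho> 1 R k \<alpha>)"
        by (simp add: p w mult_left_mono)
      show "0 \<le> (case p of (k, \<alpha>) \<Rightarrow> norm (x k \<alpha>) * w k \<alpha>)" using w by (simp add: p wT_def)
    qed
  qed
qed

lemma incl_cont:
  assumes r: "0 < r"
  shows "continuous_map (seminorm_topology (alg n (WF r)) (wnorm ` WF r)) (seminorm_topology (alg n (WT r)) (wnorm ` WT r)) (\<lambda>x. x)"
proof (rule continuous_semi[OF semi_F[OF r] semi_T[OF r]])
  show "\<And>x. x \<in> alg n (WF r) \<Longrightarrow> x \<in> alg n (WT r)" using AF_sub_AT[OF r] by blast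
  show "\<And>x y. y - x = y - x" by simp
  fix q assume "q \<in> wnorm ` WT r"
  then obtain \<rho> R where w: "q = wnorm (wT \<rho> R)" "0 < \<rho>" "ereal \<rho> < r" "1 \<le> R" using wT_in by blast
  have wf: "wF \<rho> 1 R \<in> WF r" using w by (intro wF_mem) auto
  have wt: "wT \<rho> R \<in> WT r" using w by (intro wT_mem) auto
  show "\<exists>p\<in>wnorm ` WF r. \<exists>C>0. \<forall>z\<in>alg n (WF r). q z \<le> C * p z"
  proof (intro bexI[of _ "wnorm (wF \<rho> 1 R)"] exI[of _ 1] conjI ballI)
    fix z assume z: "z \<in> alg n (WF r)"
    have zt: "z \<in> alg n (WT r)" using AF_sub_AT[OF r] z by blast
    show "q z \<le> 1 * wnorm (wF \<rho> 1 R) z" unfolding w(1) wnorm_def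
      by (simp, rule infsum_mono[OF alg_summ[OF zt wt] alg_summ[OF z wf]])
         (use w wT_le_wF in \<open>auto intro!: mult_left_mono\<close>)
  qed (use wf in auto)
qed

lemma powr_sw_le:
  assumes "\<beta> \<in> words n" "1 \<le> (\<tau>::real)"
  shows "\<tau> powr (of_int (switches (cn n \<beta>) + 1)) \<le> \<tau> powr (4 * real n + 1)"
  using cn_words(3)[OF assms(1)] assms(2) by (intro powr_mono) auto

lemma dom_TF: "0 < \<rho> \<Longrightarrow> 1 \<le> \<tau> \<Longrightarrow> 1 \<le> R \<Longrightarrow> cndom n (wF \<rho> \<tau> R) (wT \<rho> R) (\<tau> powr (4 * real n + 1))"
  unfolding cndom_def
proof (intro conjI allI impI)
  fix k \<beta> assume "0 < \<rho>" "1 \<le> \<tau>" "1 \<le> R" "\<beta> \<in> words n"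
  then show "wF \<rho> \<tau> R k (cn n \<beta>) \<le> \<tau> powr (4 * real n + 1) * wT \<rho> R k \<beta>"
    using powr_sw_le[of \<beta> n \<tau>] cn_words(5)[of \<beta> n]
    by (simp add: wF_def wT_def mult_ac mult_left_mono mult_right_mono)
qed simp

lemma dom_FF: "0 < \<rho> \<Longrightarrow> 1 \<le> \<tau> \<Longrightarrow> 1 \<le> R \<Longrightarrow> cndom n (wF \<rho> \<tau> R) (wF \<rho> \<tau> R) (\<tau> powr (4 * real n + 1))"
  using dom_TF[of \<rho> \<tau> R n] wT_le_wF[of \<tau> \<rho> R]
  unfolding cndom_def by (meson dual_order.trans mult_left_mono)

lemma dom_TT: "0 < \<rho> \<Longrightarrow> 1 \<le> R \<Longrightarrow> cndom n (wT \<rho> R) (wT \<rho> R) 1"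
  unfolding cndom_def using cn_words(5) by (simp add: wT_def)

lemma Phi_T_F:
  assumes r: "0 < r" and c: "c \<in> alg n (WT r)"
  shows "Phi n c \<in> alg n (WF r)"
  by (rule Phi_abs(1)[OF goodW_WT[OF r] goodW_WF[OF r] c])
     (use wF_in wT_mem dom_TF in metis)

lemma Phi_cont:
  assumes r: "0 < r"
  shows "continuous_map (seminorm_topology (alg n (WT r)) (wnorm ` WT r)) (seminorm_topology (alg n (WF r)) (wnorm ` WF r)) (Phi n)"
proof (rule continuous_semi[OF semi_T[OF r] semi_F[OF r]])
  show "\<And>x. x \<in> alg n (WT r) \<Longrightarrow> Phi n x \<in> alg n (WF r)" using Phi_T_F[OF r] by blast
  show "\<And>x y. Phi n y - Phi n x = Phi n (y - x)" by (simp add: Phi_diff)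
  fix q assume "q \<in> wnorm ` WF r"
  then obtain \<rho> \<tau> R where w: "q = wnorm (wF \<rho> \<tau> R)" "0 < \<rho>" "ereal \<rho> < r" "1 \<le> \<tau>" "1 \<le> R" using wF_in by blast
  have wf: "wF \<rho> \<tau> R \<in> WF r" using w by (intro wF_mem) auto
  have wt: "wT \<rho> R \<in> WT r" using w by (intro wT_mem) auto
  show "\<exists>p\<in>wnorm ` WT r. \<exists>C>0. \<forall>z\<in>alg n (WT r). q (Phi n z) \<le> C * p z"
  proof (intro bexI[of _ "wnorm (wT \<rho> R)"] exI[of _ "\<tau> powr (4 * real n + 1)"] conjI ballI)
    fix z assume z: "z \<in> alg n (WT r)"
    show "q (Phi n z) \<le> \<tau> powr (4 * real n + 1) * wnorm (wT \<rho> R) z"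
      unfolding w(1)
      by (rule Phi_abs(2)[OF goodW_WT[OF r] goodW_WF[OF r] z _ wt wf dom_TF[OF w(2,4,5)]])
         (use wF_in wT_mem dom_TF in metis)
  qed (use wt w in auto)
qed

lemma lmul_cont:
  assumes gw: "goodW W" and u: "u \<in> words n"
  shows "continuous_map (seminorm_topology (alg n W) (wnorm ` W)) (seminorm_topology (alg n W) (wnorm ` W)) (lmul s k u)"
proof (rule continuous_semi[OF semi_ok_alg[OF gw] semi_ok_alg[OF gw]])
  show "\<And>x. x \<in> alg n W \<Longrightarrow> lmul s k u x \<in> alg n W" using lmul_alg(1)[OF gw _ u] by blast
  show "\<And>x y. lmul s k u y - lmul s k u x = lmul s k u (y - x)" by (simp add: lmul_diff)
  fix q assume "q \<in> wnorm ` W"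
  then obtain w where w: "w \<in> W" "q = wnorm w" by blast
  show "\<exists>p\<in>wnorm ` W. \<exists>C>0. \<forall>z\<in>alg n W. q (lmul s k u z) \<le> C * p z"
  proof (intro bexI[of _ "wnorm w"] exI[of _ "norm s * w k u + 1"] conjI ballI)
    show "0 < norm s * w k u + 1" using wnn[OF gw w(1)] by (simp add: add_nonneg_pos)
    fix z assume z: "z \<in> alg n W"
    have "q (lmul s k u z) \<le> norm s * w k u * wnorm w z" using lmul_alg(2)[OF gw z u w(1)] w(2) by simp
    also have "\<dots> \<le> (norm s * w k u + 1) * wnorm w z" using wnorm_nonneg[OF gw w(1)] by (simp add: algebra_simps)
    finally show "q (lmul s k u z) \<le> (norm s * w k u + 1) * wnorm w z" .
  qed (use w in auto)
qed

lemma rmul_cont: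
  assumes gw: "goodW W" and u: "u \<in> words n"
  shows "continuous_map (seminorm_topology (alg n W) (wnorm ` W)) (seminorm_topology (alg n W) (wnorm ` W)) (rmul s k u)"
proof (rule continuous_semi[OF semi_ok_alg[OF gw] semi_ok_alg[OF gw]])
  show "\<And>x. x \<in> alg n W \<Longrightarrow> rmul s k u x \<in> alg n W" using rmul_alg(1)[OF gw _ u] by blast
  show "\<And>x y. rmul s k u y - rmul s k u x = rmul s k u (y - x)" by (simp add: rmul_diff)
  fix q assume "q \<in> wnorm ` W"
  then obtain w where w: "w \<in> W" "q = wnorm w" by blast
  show "\<exists>p\<in>wnorm ` W. \<exists>C>0. \<forall>z\<in>alg n W. q (rmul s k u z) \<le> C * p z"
  proof (intro bexI[of _ "wnorm w"] exI[of _ "norm s * w k u + 1"] conjI ballI)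
    show "0 < norm s * w k u + 1" using wnn[OF gw w(1)] by (simp add: add_nonneg_pos)
    fix z assume z: "z \<in> alg n W"
    have "q (rmul s k u z) \<le> norm s * w k u * wnorm w z" using rmul_alg(2)[OF gw z u w(1)] w(2) by simp
    also have "\<dots> \<le> (norm s * w k u + 1) * wnorm w z" using wnorm_nonneg[OF gw w(1)] by (simp add: algebra_simps)
    finally show "q (rmul s k u z) \<le> (norm s * w k u + 1) * wnorm w z" .
  qed (use w in auto)
qed

lemma IF_eq: "IF n r = closed_ideal_gen (alg n (WF r)) (seminorm_topology (alg n (WF r)) (wnorm ` WF r)) (relations n)"
  unfolding IF_def OF_eq XF_eq ..

lemma IT_eq: "IT n r = closed_ideal_gen (alg n (WT r)) (seminorm_topology (alg n (WT r)) (wnorm ` WT r)) (relations n)"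
  unfolding IT_def OT_eq XT_eq ..

lemma IF_props:
  assumes r: "0 < r"
  shows "IF n r \<subseteq> alg n (WF r)" "closedin (seminorm_topology (alg n (WF r)) (wnorm ` WF r)) (IF n r)"
    "two_sided_ideal (alg n (WF r)) (IF n r)" "relations n \<subseteq> IF n r" "rclosed n (IF n r)"
proof -
  note c = cig_props[OF goodW_WF[OF r] relations_alg[OF goodW_WF[OF r]], of n, folded IF_eq]
  show "IF n r \<subseteq> alg n (WF r)" "closedin (seminorm_topology (alg n (WF r)) (wnorm ` WF r)) (IF n r)"
    "two_sided_ideal (alg n (WF r)) (IF n r)" "relations n \<subseteq> IF n r" using c(1-4) by auto
  show "rclosed n (IF n r)" by (rule ideal_rclosed[OF goodW_WF[OF r] c(3) c(4)])
qed

lemma IT_props: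
  assumes r: "0 < r"
  shows "IT n r \<subseteq> alg n (WT r)" "closedin (seminorm_topology (alg n (WT r)) (wnorm ` WT r)) (IT n r)"
    "two_sided_ideal (alg n (WT r)) (IT n r)" "relations n \<subseteq> IT n r" "rclosed n (IT n r)"
    "\<And>J. relations n \<subseteq> J \<Longrightarrow> two_sided_ideal (alg n (WT r)) J \<Longrightarrow> closedin (seminorm_topology (alg n (WT r)) (wnorm ` WT r)) J \<Longrightarrow> IT n r \<subseteq> J"
proof -
  note c = cig_props[OF goodW_WT[OF r] relations_alg[OF goodW_WT[OF r]], of n, folded IT_eq]
  show "IT n r \<subseteq> alg n (WT r)" "closedin (seminorm_topology (alg n (WT r)) (wnorm ` WT r)) (IT n r)"
    "two_sided_ideal (alg n (WT r)) (IT n r)" "relations n \<subseteq> IT n r" using c(1-4) by auto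
  show "rclosed n (IT n r)" by (rule ideal_rclosed[OF goodW_WT[OF r] c(3) c(4)])
  show "\<And>J. relations n \<subseteq> J \<Longrightarrow> two_sided_ideal (alg n (WT r)) J \<Longrightarrow> closedin (seminorm_topology (alg n (WT r)) (wnorm ` WT r)) J \<Longrightarrow> IT n r \<subseteq> J"
    using c(5) by blast
qed

lemma IF_min:
  assumes r: "0 < r"
  shows "\<And>J. relations n \<subseteq> J \<Longrightarrow> two_sided_ideal (alg n (WF r)) J \<Longrightarrow> closedin (seminorm_topology (alg n (WF r)) (wnorm ` WF r)) J \<Longrightarrow> IF n r \<subseteq> J"
  using cig_props(5)[OF goodW_WF[OF r] relations_alg[OF goodW_WF[OF r]], of n, folded IF_eq] by blast

lemma IF_sub_IT:
  assumes r: "0 < r"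
  shows "IF n r \<subseteq> IT n r"
proof -
  let ?J = "{x \<in> topspace (seminorm_topology (alg n (WF r)) (wnorm ` WF r)). x \<in> IT n r}"
  have cl: "closedin (seminorm_topology (alg n (WF r)) (wnorm ` WF r)) ?J"
    by (rule closedin_continuous_map_preimage[OF incl_cont[OF r] IT_props(2)[OF r]])
  have J: "?J = {x \<in> alg n (WF r). x \<in> IT n r}" by (simp add: topspace_semi[OF semi_F[OF r]])
  have tsi: "two_sided_ideal (alg n (WF r)) {x \<in> alg n (WF r). x \<in> IT n r}"
    unfolding two_sided_ideal_def
  proof (intro conjI ballI)
    have T: "0 \<in> IT n r" "\<And>x y. x \<in> IT n r \<Longrightarrow> y \<in> IT n r \<Longrightarrow> x + y \<in> IT n r"
      "\<And>a x. a \<in> alg n (WT r) \<Longrightarrow> x \<in> IT n r \<Longrightarrow> cmul a x \<in> IT n r"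
      "\<And>a x. a \<in> alg n (WT r) \<Longrightarrow> x \<in> IT n r \<Longrightarrow> cmul x a \<in> IT n r"
      using IT_props(3)[OF r] unfolding two_sided_ideal_def by blast+
    show "{x \<in> alg n (WF r). x \<in> IT n r} \<subseteq> alg n (WF r)" by blast
    show "0 \<in> {x \<in> alg n (WF r). x \<in> IT n r}" using T(1) alg_zero by blast
    fix x y assume "x \<in> {x \<in> alg n (WF r). x \<in> IT n r}" "y \<in> {x \<in> alg n (WF r). x \<in> IT n r}"
    then show "x + y \<in> {x \<in> alg n (WF r). x \<in> IT n r}" using T(2) alg_add[OF goodW_WF[OF r]] by blast
  next
    fix a x assume a: "a \<in> alg n (WF r)" and x: "x \<in> {x \<in> alg n (WF r). x \<in> IT n r}"
    have T: "\<And>a x. a \<in> alg n (WT r) \<Longrightarrow> x \<in> IT n r \<Longrightarrow> cmul a x \<in> IT n r"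
      "\<And>a x. a \<in> alg n (WT r) \<Longrightarrow> x \<in> IT n r \<Longrightarrow> cmul x a \<in> IT n r"
      using IT_props(3)[OF r] unfolding two_sided_ideal_def by blast+
    have aT: "a \<in> alg n (WT r)" using a AF_sub_AT[OF r] by blast
    show "cmul a x \<in> {x \<in> alg n (WF r). x \<in> IT n r}"
      using T(1)[OF aT] x alg_cmul[OF goodW_WF[OF r] a] by blast
    show "cmul x a \<in> {x \<in> alg n (WF r). x \<in> IT n r}"
      using T(2)[OF aT] x alg_cmul[OF goodW_WF[OF r] _ a] by blast
  qed
  have rel: "relations n \<subseteq> {x \<in> alg n (WF r). x \<in> IT n r}"
    using relations_alg[OF goodW_WF[OF r]] IT_props(4)[OF r] by blast
  show ?thesis using IF_min[OF r rel tsi cl[unfolded J]] by blast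
qed

lemma gen_mem:
  assumes I: "rclosed n I" and b: "\<beta> \<in> words n"
  shows "monom s k \<beta> - monom s k (cn n \<beta>) \<in> I"
  by (rule F1_pair[OF I b cn_words(1)[OF b]]) (simp add: cn_words(2)[OF b])

lemma diffF:
  assumes r: "0 < r" and x: "x \<in> alg n (WF r)"
  shows "x - Phi n x \<in> IF n r"
proof (rule Phi_diff_mem[OF goodW_WF[OF r] x _ IF_props(2)[OF r]])
  fix w assume "w \<in> WF r"
  then obtain \<rho> \<tau> R where w: "w = wF \<rho> \<tau> R" "0 < \<rho>" "ereal \<rho> < r" "1 \<le> \<tau>" "1 \<le> R" using wF_in by blast
  show "\<exists>w1\<in>WF r. \<exists>C. cndom n w w1 C" using w dom_FF[OF w(2,4,5)] wF_mem[OF w(2,3,4,5)] by blast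
next
  show "0 \<in> IF n r" using rclosedD(1)[OF IF_props(5)[OF r]] .
  show "\<And>x y. x \<in> IF n r \<Longrightarrow> y \<in> IF n r \<Longrightarrow> x + y \<in> IF n r" using rclosedD(3)[OF IF_props(5)[OF r]] .
  show "IF n r \<subseteq> alg n (WF r)" by (rule IF_props(1)[OF r])
  show "\<And>s k \<beta>. \<beta> \<in> words n \<Longrightarrow> monom s k \<beta> - monom s k (cn n \<beta>) \<in> IF n r" using gen_mem[OF IF_props(5)[OF r]] .
qed

lemma diffT:
  assumes r: "0 < r" and x: "x \<in> alg n (WT r)"
  shows "x - Phi n x \<in> IT n r"
proof (rule Phi_diff_mem[OF goodW_WT[OF r] x _ IT_props(2)[OF r]])
  fix w assume "w \<in> WT r"
  then obtain \<rho> R where w: "w = wT \<rho> R" "0 < \<rho>" "ereal \<rho> < r" "1 \<le> R" using wT_in by blast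
  show "\<exists>w1\<in>WT r. \<exists>C. cndom n w w1 C" using w dom_TT[OF w(2,4)] wT_mem[OF w(2,3,4)] by blast
next
  show "0 \<in> IT n r" using rclosedD(1)[OF IT_props(5)[OF r]] .
  show "\<And>x y. x \<in> IT n r \<Longrightarrow> y \<in> IT n r \<Longrightarrow> x + y \<in> IT n r" using rclosedD(3)[OF IT_props(5)[OF r]] .
  show "IT n r \<subseteq> alg n (WT r)" by (rule IT_props(1)[OF r])
  show "\<And>s k \<beta>. \<beta> \<in> words n \<Longrightarrow> monom s k \<beta> - monom s k (cn n \<beta>) \<in> IT n r" using gen_mem[OF IT_props(5)[OF r]] .
qed

lemma closedin_all_preimage:
  assumes f: "\<And>i. i \<in> Ix \<Longrightarrow> continuous_map X Y (f i)" and C: "closedin Y C"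
  shows "closedin X {x \<in> topspace X. \<forall>i\<in>Ix. f i x \<in> C}"
proof (cases "Ix = {}")
  case True then show ?thesis by simp
next
  case False
  have "{x \<in> topspace X. \<forall>i\<in>Ix. f i x \<in> C} = \<Inter> ((\<lambda>i. {x \<in> topspace X. f i x \<in> C}) ` Ix)"
    using False by auto
  also have "closedin X \<dots>"
    by (rule closedin_Inter) (use False closedin_continuous_map_preimage[OF f C] in auto)
  finally show ?thesis .
qed

definition Ix :: "nat \<Rightarrow> (complex \<times> int \<times> nat list \<times> complex \<times> int \<times> nat list) set" where
  "Ix n = {(s1, k1, u1, s2, k2, u2). u1 \<in> words n \<and> u2 \<in> words n}"

definition gm :: "nat \<Rightarrow> complex \<times> int \<times> nat list \<times> complex \<times> int \<times> nat list \<Rightarrow> coeffs \<Rightarrow> coeffs" where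
  "gm n = (\<lambda>(s1, k1, u1, s2, k2, u2) c. Phi n (lmul s1 k1 u1 (rmul s2 k2 u2 c)))"

definition KK :: "nat \<Rightarrow> ereal \<Rightarrow> coeffs set" where
  "KK n r = {c \<in> alg n (WT r). \<forall>i\<in>Ix n. gm n i c \<in> IF n r}"

lemma KK_iff: "c \<in> KK n r \<longleftrightarrow> c \<in> alg n (WT r) \<and>
   (\<forall>s1 k1 u1 s2 k2 u2. u1 \<in> words n \<longrightarrow> u2 \<in> words n \<longrightarrow> Phi n (lmul s1 k1 u1 (rmul s2 k2 u2 c)) \<in> IF n r)"
  unfolding KK_def Ix_def gm_def by auto

lemma KK_closed:
  assumes r: "0 < r"
  shows "closedin (seminorm_topology (alg n (WT r)) (wnorm ` WT r)) (KK n r)"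
proof -
  have "continuous_map (seminorm_topology (alg n (WT r)) (wnorm ` WT r)) (seminorm_topology (alg n (WF r)) (wnorm ` WF r)) (gm n i)"
    if i: "i \<in> Ix n" for i
  proof -
    obtain s1 k1 u1 s2 k2 u2 where ii: "i = (s1, k1, u1, s2, k2, u2)" by (cases i) auto
    then have u: "u1 \<in> words n" "u2 \<in> words n" using i by (auto simp: Ix_def)
    have "gm n i = Phi n \<circ> (lmul s1 k1 u1 \<circ> rmul s2 k2 u2)" by (simp add: gm_def ii fun_eq_iff)
    moreover have "continuous_map (seminorm_topology (alg n (WT r)) (wnorm ` WT r)) (seminorm_topology (alg n (WF r)) (wnorm ` WF r)) (Phi n \<circ> (lmul s1 k1 u1 \<circ> rmul s2 k2 u2))"
      by (intro continuous_map_compose[OF continuous_map_compose[OF rmul_cont lmul_cont] Phi_cont[OF r]])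
         (use u goodW_WT[OF r] in auto)
    ultimately show ?thesis by simp
  qed
  from closedin_all_preimage[OF this IF_props(2)[OF r]]
  show ?thesis unfolding KK_def topspace_semi[OF semi_T[OF r]] .
qed

lemma KK_ideal:
  assumes r: "0 < r"
  shows "two_sided_ideal (alg n (WT r)) (KK n r)" "relations n \<subseteq> KK n r"
proof -
  note gT = goodW_WT[OF r]
  note IFr = IF_props(5)[OF r]
  have K0: "0 \<in> KK n r" using rclosedD(1)[OF IFr] alg_zero unfolding KK_iff by simp
  have Kadd: "x + y \<in> KK n r" if "x \<in> KK n r" "y \<in> KK n r" for x y
    using that rclosedD(3)[OF IFr] alg_add[OF gT] unfolding KK_iff by (simp add: rmul_add lmul_add Phi_add)
  have KA: "KK n r \<subseteq> alg n (WT r)" unfolding KK_def by blast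
  have Kl: "lmul s k u x \<in> KK n r" if "u \<in> words n" "x \<in> KK n r" for s k u x
  proof -
    have "lmul s1 k1 u1 (rmul s2 k2 u2 (lmul s k u x)) = lmul (s1 * s) (k1 + k) (u1 @ u) (rmul s2 k2 u2 x)" for s1 k1 u1 s2 k2 u2
      by (simp add: lmul_rmul[symmetric] lmul_lmul)
    then show ?thesis using that lmul_alg(1)[OF gT _ that(1)] unfolding KK_iff by (simp add: words_append)
  qed
  have Kr: "rmul s k u x \<in> KK n r" if "u \<in> words n" "x \<in> KK n r" for s k u x
  proof -
    have "lmul s1 k1 u1 (rmul s2 k2 u2 (rmul s k u x)) = lmul s1 k1 u1 (rmul (s * s2) (k + k2) (u @ u2) x)" for s1 k1 u1 s2 k2 u2
      by (simp add: rmul_rmul)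
    then show ?thesis using that rmul_alg(1)[OF gT _ that(1)] unfolding KK_iff by (simp add: words_append)
  qed
  show "two_sided_ideal (alg n (WT r)) (KK n r)"
    unfolding two_sided_ideal_def
    using KA K0 Kadd ideal_left[OF gT KK_closed[OF r] KA K0 Kadd Kl] ideal_right[OF gT KK_closed[OF r] KA K0 Kadd Kr]
    by blast
  show "relations n \<subseteq> KK n r"
  proof
    fix x assume "x \<in> relations n"
    then obtain i j where x: "x = monom 1 0 [i, j] - monom 1 1 [j, i]" "1 \<le> i" "i < j" "j \<le> n"
      unfolding relations_eq by blast
    have xA: "x \<in> alg n (WT r)" using relations_alg[OF gT] \<open>x \<in> relations n\<close> by blast
    have "Phi n (lmul s1 k1 u1 (rmul s2 k2 u2 x)) \<in> IF n r" if u: "u1 \<in> words n" "u2 \<in> words n" for s1 k1 u1 s2 k2 u2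
    proof -
      define b1 where "b1 = u1 @ [i, j] @ u2"
      define b2 where "b2 = u1 @ [j, i] @ u2"
      have wb: "b1 \<in> words n" "b2 \<in> words n" using u x by (auto simp: b1_def b2_def words_def)
      have "lmul s1 k1 u1 (rmul s2 k2 u2 x) = monom (s1 * s2) (k1 + k2) b1 - monom (s1 * s2) (k1 + k2 + 1) b2"
        by (simp add: x(1) rmul_diff lmul_diff rmul_mono lmul_mono b1_def b2_def algebra_simps)
      then have e: "Phi n (lmul s1 k1 u1 (rmul s2 k2 u2 x)) = monom (s1 * s2) (k1 + k2) (cn n b1) - monom (s1 * s2) (k1 + k2 + 1) (cn n b2)"
        by (simp add: Phi_diff Phi_mono[OF wb(1)] Phi_mono[OF wb(2)])
      have ms: "mset (cn n b2) = mset (cn n b1)" using cn_words(1)[OF wb(1)] cn_words(1)[OF wb(2)] by (simp add: b1_def b2_def)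
      have ni: "ninv (cn n b2) = Suc (ninv (cn n b1))"
        using cn_words(2)[OF wb(1)] cn_words(2)[OF wb(2)] ninv_swap[OF x(3), of u1 u2] by (simp add: b1_def b2_def)
      have "monom (s1 * s2) (k1 + k2) (cn n b1) - monom (s1 * s2) (k1 + k2 + 1) (cn n b2) \<in> IF n r"
        by (rule F1_pair[OF IFr cn_words(4)[OF wb(1)] ms]) (simp add: ni)
      then show ?thesis using e by simp
    qed
    then show "x \<in> KK n r" using xA unfolding KK_iff by blast
  qed
qed

lemma IT_sub_KK: "0 < r \<Longrightarrow> IT n r \<subseteq> KK n r"
  by (rule IT_props(6)[OF _ KK_ideal(2) KK_ideal(1) KK_closed])

lemma inj_IT_IF:
  assumes r: "0 < r" and x: "x \<in> alg n (WF r)" "x \<in> IT n r"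
  shows "x \<in> IF n r"
proof -
  have "x \<in> KK n r" using IT_sub_KK[OF r] x(2) by blast
  then have "Phi n (lmul 1 0 [] (rmul 1 0 [] x)) \<in> IF n r" unfolding KK_iff by (auto simp: words_def)
  then have p: "Phi n x \<in> IF n r" by (simp add: lmul_one rmul_one)
  have "(x - Phi n x) + Phi n x \<in> IF n r" by (rule rclosedD(3)[OF IF_props(5)[OF r] diffF[OF r x(1)] p])
  then show ?thesis by simp
qed

lemma coset_eq_rc:
  assumes R: "rclosed n I" and y: "y \<in> coset A I x"
  shows "coset A I y = coset A I x"
proof -
  have yx: "y - x \<in> I" using y by (simp add: coset_def)
  show ?thesis
  proof (intro set_eqI iffI)
    fix z assume "z \<in> coset A I y"
    then have z: "z \<in> A" "z - y \<in> I" by (auto simp: coset_def)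
    have "(z - y) + (y - x) \<in> I" by (rule rclosedD(3)[OF R z(2) yx])
    moreover have "(z - y) + (y - x) = z - x" by simp
    ultimately have "z - x \<in> I" by metis
    then show "z \<in> coset A I x" using z(1) by (simp add: coset_def)
  next
    fix z assume "z \<in> coset A I x"
    then have z: "z \<in> A" "z - x \<in> I" by (auto simp: coset_def)
    have "(z - x) - (y - x) \<in> I" by (rule rclosed_diff[OF R z(2) yx])
    moreover have "(z - x) - (y - x) = z - y" by simp
    ultimately have "z - y \<in> I" by metis
    then show "z \<in> coset A I y" using z(1) by (simp add: coset_def)
  qed
qed

theorem theorem8p8:
  fixes n :: nat and r :: ereal
  assumes "0 < r"
  shows "homeomorphic_map (Odef n r) (OdefT n r) (induced_map n r)"
proof -
  note r = assms
  define AF where "AF = alg n (WF r)"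
  define AT where "AT = alg n (WT r)"
  define XF' where "XF' = seminorm_topology AF (wnorm ` WF r)"
  define XT' where "XT' = seminorm_topology AT (wnorm ` WT r)"
  define I1 where "I1 = IF n r"
  define I2 where "I2 = IT n r"
  have Od: "Odef n r = quotient_top AF XF' I1"
    unfolding Odef_def OF_eq XF_eq AF_def XF'_def I1_def ..
  have OdT: "OdefT n r = quotient_top AT XT' I2"
    unfolding OdefT_def OT_eq XT_eq AT_def XT'_def I2_def ..
  have ind: "induced_map n r = (\<lambda>C. {y \<in> AT. \<exists>x\<in>C. y - x \<in> I2})"
    unfolding induced_map_def OT_eq AT_def I2_def ..
  have topF: "topspace XF' = AF" unfolding XF'_def AF_def by (rule topspace_semi[OF semi_F[OF r]])
  have topT: "topspace XT' = AT" unfolding XT'_def AT_def by (rule topspace_semi[OF semi_T[OF r]])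
  have R1: "rclosed n I1" unfolding I1_def by (rule IF_props(5)[OF r])
  have R2: "rclosed n I2" unfolding I2_def by (rule IT_props(5)[OF r])
  have I1_0: "0 \<in> I1" and I1_neg: "\<And>x. x \<in> I1 \<Longrightarrow> - x \<in> I1" and I1_add: "\<And>x y. x \<in> I1 \<Longrightarrow> y \<in> I1 \<Longrightarrow> x + y \<in> I1"
    using rclosedD(1,3)[OF R1] rclosed_neg[OF R1] by auto
  have I2_0: "0 \<in> I2" and I2_neg: "\<And>x. x \<in> I2 \<Longrightarrow> - x \<in> I2" and I2_add: "\<And>x y. x \<in> I2 \<Longrightarrow> y \<in> I2 \<Longrightarrow> x + y \<in> I2"
    using rclosedD(1,3)[OF R2] rclosed_neg[OF R2] by auto
  have qF1: "openin (quotient_top AF XF' I1) W \<longleftrightarrow> W \<subseteq> quotient_set AF I1 \<and> openin XF' (\<Union>W)" for W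
    by (rule quot_open(1)[OF topF]) (use I1_0 I1_neg I1_add in auto)
  have qF2: "topspace (quotient_top AF XF' I1) = quotient_set AF I1"
    by (rule quot_open(2)[OF topF]) (use I1_0 I1_neg I1_add in auto)
  have qT1: "openin (quotient_top AT XT' I2) W \<longleftrightarrow> W \<subseteq> quotient_set AT I2 \<and> openin XT' (\<Union>W)" for W
    by (rule quot_open(1)[OF topT]) (use I2_0 I2_neg I2_add in auto)
  have qT2: "topspace (quotient_top AT XT' I2) = quotient_set AT I2"
    by (rule quot_open(2)[OF topT]) (use I2_0 I2_neg I2_add in auto)
  have cfF1: "x \<in> coset AF I1 x" if "x \<in> AF" for x using that I1_0 by (simp add: coset_def)
  have cfT1: "x \<in> coset AT I2 x" if "x \<in> AT" for x using that I2_0 by (simp add: coset_def)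
  have cfF2: "coset AF I1 y = coset AF I1 x" if "y \<in> coset AF I1 x" for x y by (rule coset_eq_rc[OF R1 that])
  have cfT2: "coset AT I2 y = coset AT I2 x" if "y \<in> coset AT I2 x" for x y by (rule coset_eq_rc[OF R2 that])
  have AFAT: "AF \<subseteq> AT" unfolding AF_def AT_def by (rule AF_sub_AT[OF r])
  have I12: "I1 \<subseteq> I2" unfolding I1_def I2_def by (rule IF_sub_IT[OF r])
  have injI: "x \<in> I1" if "x \<in> AF" "x \<in> I2" for x
    using inj_IT_IF[OF r] that unfolding AF_def I1_def I2_def by blast
  have PhiF: "Phi n c \<in> AF" if "c \<in> AT" for c using Phi_T_F[OF r] that unfolding AF_def AT_def by blast
  have dT: "c - Phi n c \<in> I2" if "c \<in> AT" for c using diffT[OF r] that unfolding AT_def I2_def by blast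
  have dF: "x - Phi n x \<in> I1" if "x \<in> AF" for x using diffF[OF r] that unfolding AF_def I1_def by blast
  have adF: "x - y \<in> AF" if "x \<in> AF" "y \<in> AF" for x y using alg_diff[OF goodW_WF[OF r]] that unfolding AF_def by blast
  have sub2: "x - y \<in> I2" if "x \<in> I2" "y \<in> I2" for x y by (rule rclosed_diff[OF R2 that])
  have fF: "induced_map n r (coset AF I1 x) = coset AT I2 x" if x: "x \<in> AF" for x
  proof (unfold ind, intro set_eqI iffI)
    fix y assume "y \<in> {y \<in> AT. \<exists>x'\<in>coset AF I1 x. y - x' \<in> I2}"
    then obtain x' where y: "y \<in> AT" "x' \<in> AF" "x' - x \<in> I1" "y - x' \<in> I2" by (auto simp: coset_def)
    have "(y - x') + (x' - x) \<in> I2" using I2_add y(4) I12 y(3) by blast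
    moreover have "(y - x') + (x' - x) = y - x" by simp
    ultimately show "y \<in> coset AT I2 x" using y(1) unfolding coset_def by (metis (mono_tags, lifting) mem_Collect_eq)
  next
    fix y assume "y \<in> coset AT I2 x"
    then have y: "y \<in> AT" "y - x \<in> I2" by (auto simp: coset_def)
    have "x \<in> coset AF I1 x" using x I1_0 by (simp add: coset_def)
    then show "y \<in> {y \<in> AT. \<exists>x'\<in>coset AF I1 x. y - x' \<in> I2}" using y by blast
  qed
  have gT: "coset AT I2 c \<inter> AF = coset AF I1 (Phi n c)" if c: "c \<in> AT" for c
  proof (intro set_eqI iffI)
    fix y assume "y \<in> coset AT I2 c \<inter> AF"
    then have y: "y \<in> AF" "y - c \<in> I2" by (auto simp: coset_def)
    have "(y - c) + (c - Phi n c) \<in> I2" using I2_add y(2) dT[OF c] by blast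
    moreover have "(y - c) + (c - Phi n c) = y - Phi n c" by simp
    ultimately have "y - Phi n c \<in> I2" by metis
    then have "y - Phi n c \<in> I1" using injI adF[OF y(1) PhiF[OF c]] by blast
    then show "y \<in> coset AF I1 (Phi n c)" using y(1) by (simp add: coset_def)
  next
    fix y assume "y \<in> coset AF I1 (Phi n c)"
    then have y: "y \<in> AF" "y - Phi n c \<in> I1" by (auto simp: coset_def)
    have "(y - Phi n c) - (c - Phi n c) \<in> I2" using sub2 I12 y(2) dT[OF c] by blast
    moreover have "(y - Phi n c) - (c - Phi n c) = y - c" by simp
    ultimately have "y - c \<in> I2" by metis
    then show "y \<in> coset AT I2 c \<inter> AF" using y(1) AFAT by (auto simp: coset_def)
  qed
  define g where "g = (\<lambda>C. C \<inter> AF)"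
  have QF: "C \<in> quotient_set AF I1 \<longleftrightarrow> (\<exists>x\<in>AF. C = coset AF I1 x)" for C by (auto simp: quotient_set_def)
  have QT: "C \<in> quotient_set AT I2 \<longleftrightarrow> (\<exists>x\<in>AT. C = coset AT I2 x)" for C by (auto simp: quotient_set_def)
  have gf: "g (induced_map n r C) = C" if CQ: "C \<in> quotient_set AF I1" for C
  proof -
    obtain x where x: "x \<in> AF" "C = coset AF I1 x" using CQ unfolding QF by blast
    have xT: "x \<in> AT" using x AFAT by blast
    have xc: "x \<in> coset AF I1 (Phi n x)" using x(1) dF[OF x(1)] by (simp add: coset_def)
    have "coset AF I1 (Phi n x) = coset AF I1 x" using cfF2[OF xc] by simp
    then show ?thesis using fF[OF x(1)] gT[OF xT] x(2) by (simp add: g_def)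
  qed
  have fg: "induced_map n r (g C) = C" if CQ: "C \<in> quotient_set AT I2" for C
  proof -
    obtain c where c: "c \<in> AT" "C = coset AT I2 c" using CQ unfolding QT by blast
    have "Phi n c \<in> coset AT I2 c"
    proof -
      have "- (c - Phi n c) \<in> I2" using I2_neg dT[OF c(1)] by blast
      moreover have "- (c - Phi n c) = Phi n c - c" by simp
      ultimately have "Phi n c - c \<in> I2" by metis
      then show ?thesis using PhiF[OF c(1)] AFAT by (auto simp: coset_def)
    qed
    then have "coset AT I2 (Phi n c) = coset AT I2 c" by (rule cfT2)
    then show ?thesis using fF[OF PhiF[OF c(1)]] gT[OF c(1)] c(2) by (simp add: g_def)
  qed
  have contf: "continuous_map (quotient_top AF XF' I1) (quotient_top AT XT' I2) (induced_map n r)"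
    unfolding continuous_map qF2 qT2
  proof (intro conjI allI impI)
    show "induced_map n r ` quotient_set AF I1 \<subseteq> quotient_set AT I2"
      using fF AFAT by (auto simp: quotient_set_def)
    fix U assume "openin (quotient_top AT XT' I2) U"
    then have U: "U \<subseteq> quotient_set AT I2" "openin XT' (\<Union>U)" using qT1 by auto
    let ?P = "{C \<in> quotient_set AF I1. induced_map n r C \<in> U}"
    have eq: "\<Union>?P = {x \<in> topspace XF'. x \<in> \<Union>U}"
    proof (intro set_eqI iffI)
      fix x assume "x \<in> \<Union>?P"
      then obtain C where C: "C \<in> quotient_set AF I1" "induced_map n r C \<in> U" "x \<in> C" by blast
      obtain x0 where x0: "x0 \<in> AF" "C = coset AF I1 x0" using C(1) unfolding QF by blast
      have xF: "x \<in> AF" using C(3) x0 by (simp add: coset_def)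
      have "coset AF I1 x = C" using cfF2[OF C(3)[unfolded x0(2)]] x0(2) by simp
      then have "coset AT I2 x \<in> U" using C(2) fF[OF xF] by simp
      moreover have "x \<in> coset AT I2 x" using cfT1 xF AFAT by blast
      ultimately show "x \<in> {x \<in> topspace XF'. x \<in> \<Union>U}" using xF topF by blast
    next
      fix x assume "x \<in> {x \<in> topspace XF'. x \<in> \<Union>U}"
      then obtain D where D: "x \<in> AF" "D \<in> U" "x \<in> D" using topF by blast
      obtain c0 where c0: "c0 \<in> AT" "D = coset AT I2 c0" using subsetD[OF U(1) D(2)] unfolding QT by blast
      have "coset AT I2 x = D" using cfT2[OF D(3)[unfolded c0(2)]] c0(2) by simp
      then have "coset AF I1 x \<in> ?P" using D fF[OF D(1)] QF by auto
      moreover have "x \<in> coset AF I1 x" using cfF1 D(1) by blast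
      ultimately show "x \<in> \<Union>?P" by blast
    qed
    have "openin XF' {x \<in> topspace XF'. x \<in> \<Union>U}"
      using openin_continuous_map_preimage[OF incl_cont[OF r, of n, folded AF_def AT_def] U(2)[unfolded XT'_def]]
      unfolding XF'_def by simp
    then show "openin (quotient_top AF XF' I1) {x \<in> quotient_set AF I1. induced_map n r x \<in> U}"
      using qF1 eq by auto
  qed
  have contg: "continuous_map (quotient_top AT XT' I2) (quotient_top AF XF' I1) g"
    unfolding continuous_map qF2 qT2
  proof (intro conjI allI impI)
    show "g ` quotient_set AT I2 \<subseteq> quotient_set AF I1"
      using gT PhiF by (auto simp: quotient_set_def g_def)
    fix V assume "openin (quotient_top AF XF' I1) V"
    then have V: "V \<subseteq> quotient_set AF I1" "openin XF' (\<Union>V)" using qF1 by auto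
    let ?P = "{C \<in> quotient_set AT I2. g C \<in> V}"
    have eq: "\<Union>?P = {c \<in> topspace XT'. Phi n c \<in> \<Union>V}"
    proof (intro set_eqI iffI)
      fix c assume "c \<in> \<Union>?P"
      then obtain C where C: "C \<in> quotient_set AT I2" "g C \<in> V" "c \<in> C" by blast
      obtain c0 where c0: "c0 \<in> AT" "C = coset AT I2 c0" using C(1) unfolding QT by blast
      have cT: "c \<in> AT" using C(3) c0 by (simp add: coset_def)
      have "coset AT I2 c = C" using cfT2[OF C(3)[unfolded c0(2)]] c0(2) by simp
      then have "coset AF I1 (Phi n c) \<in> V" using C(2) gT[OF cT] by (simp add: g_def)
      moreover have "Phi n c \<in> coset AF I1 (Phi n c)" using cfF1 PhiF[OF cT] by blast
      ultimately show "c \<in> {c \<in> topspace XT'. Phi n c \<in> \<Union>V}" using cT topT by blast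
    next
      fix c assume "c \<in> {c \<in> topspace XT'. Phi n c \<in> \<Union>V}"
      then obtain D where D: "c \<in> AT" "D \<in> V" "Phi n c \<in> D" using topT by blast
      obtain x0 where x0: "x0 \<in> AF" "D = coset AF I1 x0" using subsetD[OF V(1) D(2)] unfolding QF by blast
      have "coset AF I1 (Phi n c) = D" using cfF2[OF D(3)[unfolded x0(2)]] x0(2) by simp
      then have "coset AT I2 c \<in> ?P" using D gT[OF D(1)] QT by (auto simp: g_def)
      moreover have "c \<in> coset AT I2 c" using cfT1 D(1) by blast
      ultimately show "c \<in> \<Union>?P" by blast
    qed
    have "openin XT' {c \<in> topspace XT'. Phi n c \<in> \<Union>V}"
      using openin_continuous_map_preimage[OF Phi_cont[OF r, of n, folded AF_def AT_def] V(2)[unfolded XF'_def]]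
      unfolding XT'_def by simp
    then show "openin (quotient_top AT XT' I2) {x \<in> quotient_set AT I2. g x \<in> V}"
      using qT1 eq by auto
  qed
  have "homeomorphic_maps (quotient_top AF XF' I1) (quotient_top AT XT' I2) (induced_map n r) g"
    unfolding homeomorphic_maps_def qF2 qT2 using contf contg gf fg by blast
  then show ?thesis unfolding Od OdT homeomorphic_map_maps by blast
qed

end
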